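(* Let $f : 2^V \to \mathbb{Z}_{\ge 0}$ be a connectivity function and $(T,L)$ a branch decomposition of $f$ of width $k$ having $h \ge 1$ edges of width $k$. Let $uv$ be an edge of $T$ with $f(uv)=k$, inducing the bipartition $(W, V\setminus W)$ where $W$ is the set of elements of $V$ mapped to leaves on $u$'s side. If there exists a $W$-improvement, then there exists a $W$-improvement $(C_1,C_2,C_3)$ such that the refinement of $(T,L)$ with $(uv,C_1,C_2,C_3)$ has width at most $k$ and has fewer than $h$ edges of width $k$.
   Context: A connectivity function $f:2^V\to\mathbb{Z}_{\ge0}$ ($V$ finite) satisfies $f(\emptyset)=0$, $f(X)=f(V\setminus X)$, and $f(X\cup Y)+f(X\cap Y)\le f(X)+f(Y)$. A branch decomposition of $f$ is $(T,L)$ with $T$ a tree whose nodes have degree 1 or 3 and $L$ a bijection from $V$ to the leaves of $T$; an edge $e$ of $T$ induces via $T-e$ a bipartition $(X,V\setminus X)$ and has width $f(e)=f(X)$; the width of $(T,L)$ is the maximum edge width. For $W\subseteq V$, a $W$-improvement is a tripartition $(C_1,C_2,C_3)$ of $V$ (pairwise disjoint, possibly empty, union $V$) such that for each $i$: $f(C_i)<f(W)/2$, $f(C_i\cap W)<f(W)$ and $f(C_i\cap (V\setminus W))<f(W)$. A partial branch decomposition is a pair $(T,L)$ with $T$ as before and $L$ an injection from a subset of $V$ into the leaves. The refinement of $(T,L)$ with $(uv,C_1,C_2,C_3)$ is defined as follows: for each $i\in\{1,2,3\}$ take a copy $T_i$ of $T$ with labeling $L$ restricted to $C_i$, let $u_iv_i$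 be the copy of $uv$ in $T_i$, and subdivide $u_iv_i$ by a new node $w_i$; take the disjoint union of $T_1,T_2,T_3$ and add a new node $t$ adjacent to $w_1,w_2,w_3$; finally, repeatedly delete degree-1 nodes that are not labeled and suppress degree-2 nodes (a degree-2 node with neighbors $a,b$ is deleted and replaced by the edge $ab$). *)

theory Defs
  imports Main
begin

definition connectivity_function :: "'v set \<Rightarrow> ('v set \<Rightarrow> nat) \<Rightarrow> bool" where
  "connectivity_function V f \<longleftrightarrow> finite V \<and> f {} = 0
     \<and> (\<forall>X. X \<subseteq> V \<longrightarrow> f X = f (V - X))
     \<and> (\<forall>X Y. X \<subseteq> V \<longrightarrow> Y \<subseteq> V \<longrightarrow> f (X \<union> Y) + f (X \<inter> Y) \<le> f X + f Y)"

definition graph :: "'n set \<Rightarrow> 'n set set \<Rightarrow> bool" where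
  "graph N E \<longleftrightarrow> finite N \<and> (\<forall>e\<in>E. e \<subseteq> N \<and> card e = 2)"

definition adj :: "'n set set \<Rightarrow> ('n \<times> 'n) set" where
  "adj E = {(a, b). {a, b} \<in> E}"

definition reach :: "'n set set \<Rightarrow> 'n \<Rightarrow> 'n \<Rightarrow> bool" where
  "reach E a b \<longleftrightarrow> (a, b) \<in> (adj E)\<^sup>*"

definition deg :: "'n set set \<Rightarrow> 'n \<Rightarrow> nat" where
  "deg E x = card {e \<in> E. x \<in> e}"

text \<open>A tree: nonempty, connected, and acyclic (every edge is a bridge, i.e. removing it
  disconnects its endpoints).\<close>
definition tree :: "'n set \<Rightarrow> 'n set set \<Rightarrow> bool" where
  "tree N E \<longleftrightarrow> graph N E \<and> N \<noteq> {}
     \<and> (\<forall>a\<in>N. \<forall>b\<in>N. reach E a b)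
     \<and> (\<forall>a b. {a, b} \<in> E \<longrightarrow> \<not> reach (E - {{a, b}}) a b)"

definition leaves :: "'n set \<Rightarrow> 'n set set \<Rightarrow> 'n set" where
  "leaves N E = {x \<in> N. deg E x = 1}"

definition branch_decomposition ::
  "'v set \<Rightarrow> 'n set \<Rightarrow> 'n set set \<Rightarrow> ('v \<Rightarrow> 'n) \<Rightarrow> bool" where
  "branch_decomposition V N E L \<longleftrightarrow> tree N E
     \<and> (\<forall>x\<in>N. deg E x = 1 \<or> deg E x = 3)
     \<and> bij_betw L V (leaves N E)"

definition side :: "'v set \<Rightarrow> 'n set set \<Rightarrow> ('v \<Rightarrow> 'n) \<Rightarrow> 'n \<Rightarrow> 'n \<Rightarrow> 'v set" where
  "side V E L a b = {x \<in> V. reach (E - {{a, b}}) a (L x)}"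

definition edge_widths ::
  "'v set \<Rightarrow> ('v set \<Rightarrow> nat) \<Rightarrow> 'n set set \<Rightarrow> ('v \<Rightarrow> 'n) \<Rightarrow> nat set" where
  "edge_widths V f E L = {f (side V E L a b) | a b. {a, b} \<in> E}"

definition dwidth :: "'v set \<Rightarrow> ('v set \<Rightarrow> nat) \<Rightarrow> 'n set set \<Rightarrow> ('v \<Rightarrow> 'n) \<Rightarrow> nat" where
  "dwidth V f E L = Max (edge_widths V f E L)"

definition n_width_edges ::
  "'v set \<Rightarrow> ('v set \<Rightarrow> nat) \<Rightarrow> 'n set set \<Rightarrow> ('v \<Rightarrow> 'n) \<Rightarrow> nat \<Rightarrow> nat" where
  "n_width_edges V f E L k = card {e \<in> E. \<exists>a b. e = {a, b} \<and> f (side V E L a b) = k}"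

definition improvement ::
  "'v set \<Rightarrow> ('v set \<Rightarrow> nat) \<Rightarrow> 'v set \<Rightarrow> 'v set \<Rightarrow> 'v set \<Rightarrow> 'v set \<Rightarrow> bool" where
  "improvement V f W C1 C2 C3 \<longleftrightarrow>
     C1 \<inter> C2 = {} \<and> C1 \<inter> C3 = {} \<and> C2 \<inter> C3 = {} \<and> C1 \<union> C2 \<union> C3 = V
     \<and> (\<forall>C\<in>{C1, C2, C3}. 2 * f C < f W \<and> f (C \<inter> W) < f W \<and> f (C \<inter> (V - W)) < f W)"

text \<open>Nodes of the refined tree: copies \<open>Cp i n\<close> of the nodes of T (i = 1,2,3),
  the subdivision nodes \<open>Sub i\<close> (the \<open>w_i\<close>) and the new centre \<open>Ctr\<close> (the node t).\<close>
datatype 'n rnode = Cp nat 'n | Sub nat | Ctr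

definition ref_nodes :: "'n set \<Rightarrow> 'n rnode set" where
  "ref_nodes N = {Cp i x | i x. i \<in> {1, 2, 3} \<and> x \<in> N} \<union> {Sub 1, Sub 2, Sub 3, Ctr}"

definition ref_edges :: "'n set set \<Rightarrow> 'n \<Rightarrow> 'n \<Rightarrow> 'n rnode set set" where
  "ref_edges E u v =
     {{Cp i a, Cp i b} | i a b. i \<in> {1, 2, 3} \<and> {a, b} \<in> E - {{u, v}}}
     \<union> (\<Union>i\<in>{1, 2, 3}. {{Cp i u, Sub i}, {Sub i, Cp i v}, {Sub i, Ctr}})"

text \<open>Labeling of the disjoint union: x in \<open>C_i\<close> goes to the copy in \<open>T_i\<close> of its leaf;
  leaves of \<open>T_i\<close> holding elements outside \<open>C_i\<close> are unlabeled.\<close>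
definition ref_label ::
  "('v \<Rightarrow> 'n) \<Rightarrow> 'v set \<Rightarrow> 'v set \<Rightarrow> 'v \<Rightarrow> 'n rnode" where
  "ref_label L C1 C2 x = (if x \<in> C1 then Cp 1 (L x) else if x \<in> C2 then Cp 2 (L x) else Cp 3 (L x))"

inductive cleanup_step :: "'m set \<Rightarrow> 'm set \<times> 'm set set \<Rightarrow> 'm set \<times> 'm set set \<Rightarrow> bool"
  for Lab where
  delete: "x \<in> N \<Longrightarrow> deg E x = 1 \<Longrightarrow> x \<notin> Lab \<Longrightarrow>
     cleanup_step Lab (N, E) (N - {x}, {e \<in> E. x \<notin> e})"
| suppress: "x \<in> N \<Longrightarrow> deg E x = 2 \<Longrightarrow> {x, a} \<in> E \<Longrightarrow> {x, b} \<in> E \<Longrightarrow> a \<noteq> b \<Longrightarrow>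
     cleanup_step Lab (N, E) (N - {x}, {e \<in> E. x \<notin> e} \<union> {{a, b}})"

definition is_refinement ::
  "'v set \<Rightarrow> 'n set \<Rightarrow> 'n set set \<Rightarrow> ('v \<Rightarrow> 'n) \<Rightarrow> 'n \<Rightarrow> 'n \<Rightarrow> 'v set \<Rightarrow> 'v set \<Rightarrow> 'v set
     \<Rightarrow> 'n rnode set \<Rightarrow> 'n rnode set set \<Rightarrow> bool" where
  "is_refinement V N E L u v C1 C2 C3 N' E' \<longleftrightarrow>
     (let Lab = ref_label L C1 C2 ` V in
       (cleanup_step Lab)\<^sup>*\<^sup>* (ref_nodes N, ref_edges E u v) (N', E')
       \<and> (\<nexists>s. cleanup_step Lab (N', E') s))"

end

theory Submission
  imports Defs
begin

lemma adj_iff[simp]: "(a,b) \<in> adj E \<longleftrightarrow> {a,b} \<in> E"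
  by (simp add: adj_def)

lemma sym_adj: "sym (adj E)"
proof (rule symI)
  fix a b assume "(a,b) \<in> adj E"
  then show "(b,a) \<in> adj E" by (simp add: insert_commute)
qed

lemma reach_refl[simp]: "reach E a a" by (simp add: reach_def)

lemma reach_sym: "reach E a b \<Longrightarrow> reach E b a"
  using sym_rtrancl[OF sym_adj] unfolding reach_def by (rule symD)

lemma reach_trans: "reach E a b \<Longrightarrow> reach E b c \<Longrightarrow> reach E a c"
  unfolding reach_def by (rule rtrancl_trans)

lemma reach_edge: "{a,b} \<in> E \<Longrightarrow> reach E a b"
  unfolding reach_def by (rule r_into_rtrancl) simp

lemma adj_mono: "E \<subseteq> E' \<Longrightarrow> adj E \<subseteq> adj E'"
  unfolding adj_def by auto

lemma reach_mono: "reach E a b \<Longrightarrow> E \<subseteq> E' \<Longrightarrow> reach E' a b"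
  unfolding reach_def using rtrancl_mono[OF adj_mono] by blast

lemma reach_induct[consumes 1, case_names refl step]:
  assumes "reach E a b" "P a"
    "\<And>y z. reach E a y \<Longrightarrow> {y,z} \<in> E \<Longrightarrow> P y \<Longrightarrow> P z"
  shows "P b"
  using assms(1) unfolding reach_def
proof (induction rule: rtrancl_induct)
  case base then show ?case by (rule assms(2))
next
  case (step y z) then show ?case using assms(3)[of y z] by (simp add: reach_def)
qed

lemma reach_closed:
  assumes "reach E a b" "a \<in> S" "\<And>y z. {y,z} \<in> E \<Longrightarrow> y \<in> S \<Longrightarrow> z \<in> S"
  shows "b \<in> S"
  using assms(1) by (induction rule: reach_induct) (use assms in auto)

lemma reach_edge_step: "reach E a b \<Longrightarrow> {b,c} \<in> E \<Longrightarrow> reach E a c"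
  using reach_trans reach_edge by metis

lemma reach_pendant:
  assumes "\<forall>e\<in>G. x \<in> e \<longrightarrow> e = {x,y}" "y \<noteq> x" "p \<noteq> x" "q \<noteq> x" "reach G p q"
  shows "reach {e\<in>G. x \<notin> e} p q"
proof -
  let ?G = "{e\<in>G. x \<notin> e}"
  have "if z = x then reach ?G p y else reach ?G p z" if "reach G p z" for z
    using that
  proof (induction rule: reach_induct)
    case refl then show ?case using assms by simp
  next
    case (step w z)
    show ?case
    proof (cases "w = x")
      case True
      then have "{x,z} = {x,y}" using assms(1) step.hyps(2) by auto
      then show ?thesis using step.IH True by (auto simp: doubleton_eq_iff)
    next
      case False
      note wx = False
      show ?thesis
      proof (cases "z = x")
        case True
        then have "{w,x} = {x,y}" using assms(1) step.hyps(2) by auto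
        then have "w = y" using wx by (auto simp: doubleton_eq_iff)
        then show ?thesis using step.IH True wx by auto
      next
        case False
        then have "{w,z} \<in> ?G" using wx step.hyps(2) by auto
        then show ?thesis using step.IH wx False reach_edge_step by (metis (no_types, lifting))
      qed
    qed
  qed
  from this[OF assms(5)] assms(4) show ?thesis by simp
qed

lemma reach_suppress:
  assumes "\<forall>e\<in>G. x \<in> e \<longrightarrow> e = {x,a} \<or> e = {x,b}" "a \<noteq> x" "b \<noteq> x" "p \<noteq> x" "q \<noteq> x"
    "reach G p q"
  shows "reach ({e\<in>G. x \<notin> e} \<union> {{a,b}}) p q"
proof -
  let ?G = "{e\<in>G. x \<notin> e} \<union> {{a,b}}"
  have ab: "reach ?G a b" "reach ?G b a" by (auto intro: reach_edge simp: insert_commute)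
  have "if z = x then reach ?G p a else reach ?G p z" if "reach G p z" for z
    using that
  proof (induction rule: reach_induct)
    case refl then show ?case using assms by simp
  next
    case (step w z)
    show ?case
    proof (cases "w = x")
      case True
      then have "{x,z} = {x,a} \<or> {x,z} = {x,b}" using assms(1) step.hyps(2) by auto
      then show ?thesis using step.IH True ab reach_trans assms(2,3)
        by (auto simp: doubleton_eq_iff)
    next
      case False
      note wx = False
      show ?thesis
      proof (cases "z = x")
        case True
        then have "{w,x} = {x,a} \<or> {w,x} = {x,b}" using assms(1) step.hyps(2) by auto
        then have "w = a \<or> w = b" using wx by (auto simp: doubleton_eq_iff)
        then show ?thesis using step.IH True wx ab reach_trans by auto
      next
        case False
        then have "{w,z} \<in> ?G" using wx step.hyps(2) by auto
        then show ?thesis using step.IH wx False reach_edge_step by (metis (no_types, lifting))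
      qed
    qed
  qed
  from this[OF assms(6)] assms(5) show ?thesis by simp
qed

lemma reach_suppress_back:
  assumes "{x,a} \<in> G" "{x,b} \<in> G" "reach ({e\<in>G. x \<notin> e} \<union> {{a,b}}) p q"
  shows "reach G p q"
  using assms(3)
proof (induction rule: reach_induct)
  case refl then show ?case by simp
next
  case (step y z)
  have xa: "reach G a x" using assms(1) by (intro reach_edge) (simp add: insert_commute)
  have xb: "reach G x b" using assms(2) by (intro reach_edge)
  have ab: "reach G a b" using reach_trans[OF xa xb] .
  show ?case
  proof (cases "{y,z} = {a,b}")
    case True
    then have "(y = a \<and> z = b) \<or> (y = b \<and> z = a)" by (simp add: doubleton_eq_iff)
    then have "reach G y z" using ab reach_sym[OF ab] by auto
    then show ?thesis by (rule reach_trans[OF step.IH])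
  next
    case False
    then have "{y,z} \<in> G" using step.hyps(2) by blast
    then show ?thesis by (rule reach_edge_step[OF step.IH])
  qed
qed

lemma split_reach:
  assumes "reach E a z"
  shows "reach (E - {{a,b}}) a z \<or> reach (E - {{a,b}}) b z"
  using assms
proof (induction rule: reach_induct)
  case refl then show ?case by simp
next
  case (step y z)
  show ?case
  proof (cases "{y,z} = {a,b}")
    case True then show ?thesis by (auto simp: doubleton_eq_iff)
  next
    case False
    then have "{y,z} \<in> E - {{a,b}}" using step by auto
    then show ?thesis using step.IH reach_edge_step by metis
  qed
qed

lemma split_reach_disj:
  assumes "\<not> reach (E - {{a,b}}) a b" "reach (E - {{a,b}}) a z"
  shows "\<not> reach (E - {{a,b}}) b z"
  using assms reach_sym reach_trans by metis

lemma reach_pendant_eq: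
  assumes "\<forall>e\<in>G. x \<in> e \<longrightarrow> e = {x,y}" "y \<noteq> x" "p \<noteq> x" "q \<noteq> x"
  shows "reach {e\<in>G. x \<notin> e} p q \<longleftrightarrow> reach G p q"
proof
  assume "reach {e\<in>G. x \<notin> e} p q"
  then show "reach G p q" by (rule reach_mono) auto
next
  assume "reach G p q"
  then show "reach {e\<in>G. x \<notin> e} p q" using reach_pendant assms by metis
qed

definition inv_g :: "'m set \<Rightarrow> 'm \<Rightarrow> 'm \<Rightarrow> 'm set set \<Rightarrow> bool" where
  "inv_g Lab p0 q0 E \<longleftrightarrow> finite E \<and> (\<forall>e\<in>E. \<exists>c d. c \<noteq> d \<and> e = {c,d})
    \<and> (\<forall>c d. {c,d} \<in> E \<longrightarrow> \<not> reach (E - {{c,d}}) c d)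
    \<and> (\<forall>z\<in>Lab. \<forall>e1\<in>E. \<forall>e2\<in>E. z \<in> e1 \<longrightarrow> z \<in> e2 \<longrightarrow> e1 = e2)
    \<and> reach E p0 q0 \<and> p0 \<in> Lab \<and> q0 \<in> Lab"

lemma edge_ne:
  assumes "\<forall>e\<in>E. \<exists>c d. c \<noteq> d \<and> e = {c,d}" "{x,a} \<in> E"
  shows "a \<noteq> x"
proof
  assume "a = x"
  then have "{x} \<in> E" using assms(2) by simp
  then obtain c d where "c \<noteq> d" "{x} = {c,d}" using assms(1) by blast
  then show False by (metis doubleton_eq_iff insert_absorb2)
qed

lemma delete_step:
  assumes inv: "inv_g (lab ` V) p0 q0 E" and deg: "deg E x = 1" and xl: "x \<notin> lab ` V"
  defines "E' \<equiv> {e\<in>E. x \<notin> e}"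
  shows "inv_g (lab ` V) p0 q0 E' \<and> edge_widths V f E' lab \<subseteq> edge_widths V f E lab
     \<and> n_width_edges V f E' lab k \<le> n_width_edges V f E lab k"
proof -
  have fin: "finite E" and I1: "\<forall>e\<in>E. \<exists>c d. c \<noteq> d \<and> e = {c,d}"
    and I2: "\<forall>c d. {c,d} \<in> E \<longrightarrow> \<not> reach (E - {{c,d}}) c d"
    and I3: "\<forall>z\<in>lab ` V. \<forall>e1\<in>E. \<forall>e2\<in>E. z \<in> e1 \<longrightarrow> z \<in> e2 \<longrightarrow> e1 = e2"
    and I4: "reach E p0 q0" and p0: "p0 \<in> lab ` V" and q0: "q0 \<in> lab ` V"
    using inv unfolding inv_g_def by auto
  have "card {e\<in>E. x \<in> e} = Suc 0" using deg by (simp add: deg_def)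
  then obtain e0 where e0: "{e\<in>E. x \<in> e} = {e0}" by (auto simp: card_1_singleton_iff)
  then have "e0 \<in> E" "x \<in> e0" by auto
  then obtain c d where cd: "c \<noteq> d" "e0 = {c,d}" using I1 by blast
  obtain y where y: "e0 = {x,y}" "y \<noteq> x" using cd \<open>x \<in> e0\<close> by auto
  have pend: "\<forall>e\<in>G. x \<in> e \<longrightarrow> e = {x,y}" if "G \<subseteq> E" for G
    using that e0 y by auto
  have side_eq: "side V E' lab c d = side V E lab c d" if "c \<noteq> x" for c d
  proof -
    have eq: "E' - {{c,d}} = {e\<in>E - {{c,d}}. x \<notin> e}" unfolding E'_def by auto
    have "reach (E' - {{c,d}}) c (lab z) \<longleftrightarrow> reach (E - {{c,d}}) c (lab z)" if "z \<in> V" for z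
      unfolding eq
      by (rule reach_pendant_eq[OF pend]) (use that xl y \<open>c \<noteq> x\<close> in auto)
    then show ?thesis unfolding side_def by auto
  qed
  have sub: "E' \<subseteq> E" unfolding E'_def by auto
  have inv': "inv_g (lab ` V) p0 q0 E'"
    unfolding inv_g_def
  proof (intro conjI)
    show "finite E'" using fin sub finite_subset by blast
    show "\<forall>e\<in>E'. \<exists>c d. c \<noteq> d \<and> e = {c, d}" using I1 sub by blast
    show "\<forall>c d. {c, d} \<in> E' \<longrightarrow> \<not> reach (E' - {{c, d}}) c d"
    proof (intro allI impI notI)
      fix c d assume "{c,d} \<in> E'" "reach (E' - {{c, d}}) c d"
      then have "reach (E - {{c, d}}) c d" using reach_mono[of "E' - {{c,d}}" c d "E - {{c,d}}"] sub by blast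
      then show False using I2 \<open>{c,d} \<in> E'\<close> sub by blast
    qed
    show "\<forall>z\<in>lab ` V. \<forall>e1\<in>E'. \<forall>e2\<in>E'. z \<in> e1 \<longrightarrow> z \<in> e2 \<longrightarrow> e1 = e2"
      using I3 sub by blast
    show "reach E' p0 q0" unfolding E'_def
      using reach_pendant_eq[OF pend[OF order.refl] y(2)] I4 p0 q0 xl by metis
    show "p0 \<in> lab ` V" "q0 \<in> lab ` V" using p0 q0 by auto
  qed
  have w: "edge_widths V f E' lab \<subseteq> edge_widths V f E lab"
  proof
    fix w assume "w \<in> edge_widths V f E' lab"
    then obtain c d where "{c,d} \<in> E'" "w = f (side V E' lab c d)" unfolding edge_widths_def by blast
    moreover then have "c \<noteq> x" "{c,d} \<in> E" unfolding E'_def by auto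
    ultimately show "w \<in> edge_widths V f E lab" unfolding edge_widths_def using side_eq by auto
  qed
  have "{e \<in> E'. \<exists>a b. e = {a, b} \<and> f (side V E' lab a b) = k}
      \<subseteq> {e \<in> E. \<exists>a b. e = {a, b} \<and> f (side V E lab a b) = k}"
  proof
    fix e assume "e \<in> {e \<in> E'. \<exists>a b. e = {a, b} \<and> f (side V E' lab a b) = k}"
    then obtain c d where "e \<in> E'" "e = {c,d}" "f (side V E' lab c d) = k" by blast
    moreover then have "c \<noteq> x" "e \<in> E" unfolding E'_def by auto
    ultimately show "e \<in> {e \<in> E. \<exists>a b. e = {a, b} \<and> f (side V E lab a b) = k}"
      using side_eq by auto
  qed
  then have "n_width_edges V f E' lab k \<le> n_width_edges V f E lab k"
    unfolding n_width_edges_def by (rule card_mono[rotated]) (use fin in auto)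
  then show ?thesis using inv' w by blast
qed

lemma suppress_step:
  assumes inv: "inv_g (lab ` V) p0 q0 E" and deg: "deg E x = 2"
    and xa: "{x,a} \<in> E" and xb: "{x,b} \<in> E" and ab: "a \<noteq> b"
  defines "E' \<equiv> {e\<in>E. x \<notin> e} \<union> {{a,b}}"
  shows "inv_g (lab ` V) p0 q0 E' \<and> edge_widths V f E' lab \<subseteq> edge_widths V f E lab
     \<and> n_width_edges V f E' lab k \<le> n_width_edges V f E lab k"
proof -
  have fin: "finite E" and I1: "\<forall>e\<in>E. \<exists>c d. c \<noteq> d \<and> e = {c,d}"
    and I2: "\<forall>c d. {c,d} \<in> E \<longrightarrow> \<not> reach (E - {{c,d}}) c d"
    and I3: "\<forall>z\<in>lab ` V. \<forall>e1\<in>E. \<forall>e2\<in>E. z \<in> e1 \<longrightarrow> z \<in> e2 \<longrightarrow> e1 = e2"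
    and I4: "reach E p0 q0" and p0: "p0 \<in> lab ` V" and q0: "q0 \<in> lab ` V"
    using inv unfolding inv_g_def by auto
  have ax: "a \<noteq> x" using edge_ne[OF I1 xa] .
  have bx: "b \<noteq> x" using edge_ne[OF I1 xb] .
  have xaxb: "{x,a} \<noteq> {x,b}" using ab by (auto simp: doubleton_eq_iff)
  have xset: "{e\<in>E. x \<in> e} = {{x,a},{x,b}}"
  proof (rule sym, rule card_subset_eq)
    show "finite {e\<in>E. x \<in> e}" using fin by simp
    show "{{x,a},{x,b}} \<subseteq> {e\<in>E. x \<in> e}" using xa xb by auto
    show "card {{x,a},{x,b}} = card {e\<in>E. x \<in> e}" using deg xaxb by (simp add: deg_def)
  qed
  have xedges: "\<forall>e\<in>G. x \<in> e \<longrightarrow> e = {x,a} \<or> e = {x,b}" if "G \<subseteq> E" for G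
    using xset that by blast
  have xl: "x \<notin> lab ` V"
  proof
    assume xl: "x \<in> lab ` V"
    have "{x,a} = {x,b}" using I3[rule_format, OF xl xa xb] by simp
    then show False using xaxb by simp
  qed
  have abE: "{a,b} \<notin> E"
  proof
    assume abE: "{a,b} \<in> E"
    have "{x,a} \<noteq> {a,b}" "{x,b} \<noteq> {a,b}" using ax bx by (auto simp: doubleton_eq_iff)
    then have "{x,a} \<in> E - {{a,b}}" "{x,b} \<in> E - {{a,b}}" using xa xb by auto
    then have "reach (E - {{a,b}}) a x" "reach (E - {{a,b}}) x b"
      using reach_edge reach_sym by metis+
    then have "reach (E - {{a,b}}) a b" by (rule reach_trans)
    then show False using I2 abE by blast
  qed
  have sub: "{e\<in>E. x \<notin> e} \<subseteq> E" by auto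
  have R1: "reach (E' - {{c,d}}) c q \<longleftrightarrow> reach (E - {{c,d}}) c q"
    if "x \<notin> {c,d}" "{c,d} \<noteq> {a,b}" "q \<noteq> x" for c d q
  proof -
    have eq: "E' - {{c,d}} = {e\<in>E - {{c,d}}. x \<notin> e} \<union> {{a,b}}"
      unfolding E'_def using that(2) by auto
    have in1: "{x,a} \<in> E - {{c,d}}" "{x,b} \<in> E - {{c,d}}" using xa xb that(1) by auto
    show ?thesis unfolding eq
    proof
      assume "reach ({e \<in> E - {{c, d}}. x \<notin> e} \<union> {{a, b}}) c q"
      then show "reach (E - {{c, d}}) c q" using reach_suppress_back[OF in1] by blast
    next
      assume "reach (E - {{c, d}}) c q"
      then show "reach ({e \<in> E - {{c, d}}. x \<notin> e} \<union> {{a, b}}) c q"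
        using reach_suppress[OF xedges[of "E - {{c,d}}"] ax bx] that by auto
    qed
  qed
  have R2: "reach (E' - {{a',b'}}) a' q \<longleftrightarrow> reach (E - {{x,a'}}) a' q"
    if "{a',b'} = {a,b}" "a' \<noteq> b'" "q \<noteq> x" for a' b' q
  proof -
    have xa': "{x,a'} \<in> E" and xb': "{x,b'} \<in> E" and a'x: "a' \<noteq> x" and b'x: "b' \<noteq> x"
      using that xa xb ax bx by (auto simp: doubleton_eq_iff)
    have eq: "E' - {{a',b'}} = {e\<in>E - {{x,a'}}. x \<notin> e}"
      unfolding E'_def using that(1) abE by auto
    have pend: "\<forall>e\<in>E - {{x,a'}}. x \<in> e \<longrightarrow> e = {x,b'}"
      using xedges[OF order.refl] that(1) by (auto simp: doubleton_eq_iff)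
    show ?thesis unfolding eq by (rule reach_pendant_eq[OF pend b'x a'x that(3)])
  qed
  have lx: "lab z \<noteq> x" if "z \<in> V" for z using xl that by auto
  have side1: "side V E' lab c d = side V E lab c d"
    if "x \<notin> {c,d}" "{c,d} \<noteq> {a,b}" for c d
    unfolding side_def using R1[OF that] by (auto simp: lx)
  have side2: "side V E' lab a' b' = side V E lab a' x"
    if "{a',b'} = {a,b}" "a' \<noteq> b'" for a' b'
    unfolding side_def using R2[OF that] insert_commute[of a' x] by (auto simp: lx)
  have xa'': "{a',x} \<in> E" if "{a',b'} = {a,b}" for a' b'
    using that xa xb insert_commute[of a' x] by (auto simp: doubleton_eq_iff)
  have inv': "inv_g (lab ` V) p0 q0 E'"
    unfolding inv_g_def
  proof (intro conjI)
    show "finite E'" using fin unfolding E'_def by auto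
    show "\<forall>e\<in>E'. \<exists>c d. c \<noteq> d \<and> e = {c, d}"
    proof
      fix e assume "e \<in> E'"
      then have "e = {a,b} \<or> e \<in> E" unfolding E'_def by auto
      then show "\<exists>c d. c \<noteq> d \<and> e = {c, d}" using I1 ab by auto
    qed
    show "\<forall>c d. {c, d} \<in> E' \<longrightarrow> \<not> reach (E' - {{c, d}}) c d"
    proof (intro allI impI notI)
      fix c d assume cdE: "{c,d} \<in> E'" and r: "reach (E' - {{c, d}}) c d"
      show False
      proof (cases "{c,d} = {a,b}")
        case True
        have s: "E' - {{c,d}} \<subseteq> E - {{x,a}}" unfolding E'_def using True by auto
        have "reach (E - {{x,a}}) c d" using reach_mono[OF r s] .
        then have "reach (E - {{x,a}}) a b" using True reach_sym
          by (metis doubleton_eq_iff)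
        moreover have "{b,x} \<in> E - {{x,a}}" using xb xaxb insert_commute[of b x] by auto
        ultimately have "reach (E - {{x,a}}) a x" using reach_edge_step by metis
        then show False using I2 xa reach_sym by metis
      next
        case False
        then have "{c,d} \<in> E" "x \<notin> {c,d}" using cdE unfolding E'_def by auto
        then have "reach (E - {{c,d}}) c d" using R1[of c d d] r False by auto
        then show False using I2 \<open>{c,d} \<in> E\<close> by blast
      qed
    qed
    show "\<forall>z\<in>lab ` V. \<forall>e1\<in>E'. \<forall>e2\<in>E'. z \<in> e1 \<longrightarrow> z \<in> e2 \<longrightarrow> e1 = e2"
    proof (intro ballI impI)
      fix z e1 e2 assume z: "z \<in> lab ` V" and e: "e1 \<in> E'" "e2 \<in> E'" "z \<in> e1" "z \<in> e2"
      have no: False if "e \<in> E" "x \<notin> e" "z \<in> e" "z \<in> {a,b}" for e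
      proof -
        have "{x,z} \<in> E" using that(4) xa xb by auto
        then have "e = {x,z}" using I3 z that(1,3) by blast
        then show False using that(2) by simp
      qed
      have e': "e1 = {a,b} \<or> (e1 \<in> E \<and> x \<notin> e1)" "e2 = {a,b} \<or> (e2 \<in> E \<and> x \<notin> e2)"
        using e(1,2) unfolding E'_def by auto
      show "e1 = e2"
      proof (cases "e1 = {a,b}")
        case True
        then show ?thesis using e'(2) no[of e2] e(3,4) by auto
      next
        case False
        then have "e1 \<in> E" "x \<notin> e1" using e'(1) by auto
        then show ?thesis using e'(2) no[of e1] e(3,4) I3[rule_format, OF z, of e1 e2] by auto
      qed
    qed
    show "reach E' p0 q0" unfolding E'_def
      using reach_suppress[OF xedges[OF order.refl] ax bx] I4 p0 q0 xl by metis
    show "p0 \<in> lab ` V" "q0 \<in> lab ` V" using p0 q0 by auto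
  qed
  have w: "edge_widths V f E' lab \<subseteq> edge_widths V f E lab"
  proof
    fix w assume "w \<in> edge_widths V f E' lab"
    then obtain c d where cd: "{c,d} \<in> E'" "w = f (side V E' lab c d)" unfolding edge_widths_def by blast
    show "w \<in> edge_widths V f E lab"
    proof (cases "{c,d} = {a,b}")
      case True
      then have "c \<noteq> d" using ab by (auto simp: doubleton_eq_iff)
      then have "w = f (side V E lab c x)" using side2[OF True] cd by simp
      then show ?thesis unfolding edge_widths_def using xa''[OF True] by blast
    next
      case False
      then have "{c,d} \<in> E" "x \<notin> {c,d}" using cd unfolding E'_def by auto
      then show ?thesis unfolding edge_widths_def using side1 False cd by auto
    qed
  qed
  define S' where "S' = {e \<in> E'. \<exists>c d. e = {c, d} \<and> f (side V E' lab c d) = k}"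
  define S where "S = {e \<in> E. \<exists>c d. e = {c, d} \<and> f (side V E lab c d) = k}"
  have finS: "finite S" unfolding S_def using fin by auto
  have finS': "finite S'" unfolding S'_def E'_def using fin by auto
  have S1: "S' - {{a,b}} \<subseteq> S - {{x,a},{x,b}}"
  proof
    fix e assume e: "e \<in> S' - {{a,b}}"
    then obtain c d where cd: "e \<in> E'" "e = {c,d}" "f (side V E' lab c d) = k" "e \<noteq> {a,b}"
      unfolding S'_def by blast
    then have eE: "e \<in> E" "x \<notin> e" unfolding E'_def by auto
    then have "f (side V E lab c d) = k" using side1[of c d] cd by auto
    then have "e \<in> S" unfolding S_def using eE cd by blast
    moreover have "e \<noteq> {x,a}" "e \<noteq> {x,b}" using eE by auto
    ultimately show "e \<in> S - {{x,a},{x,b}}" by simp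
  qed
  have S2: "{x,a} \<in> S \<or> {x,b} \<in> S" if "{a,b} \<in> S'"
  proof -
    have "{a,b} \<in> E' \<and> (\<exists>c d. {a,b} = {c,d} \<and> f (side V E' lab c d) = k)"
      using that unfolding S'_def by (rule CollectD)
    then obtain c d where cd: "{a,b} = {c,d}" "f (side V E' lab c d) = k"
      by (elim conjE exE)
    then have "c \<noteq> d" using ab by (auto simp: doubleton_eq_iff)
    then have "f (side V E lab c x) = k" using side2[OF cd(1)[symmetric]] cd(2) by simp
    moreover have "{c,x} \<in> E" using xa''[OF cd(1)[symmetric]] .
    moreover have "c = a \<or> c = b" using cd(1) by (auto simp: doubleton_eq_iff)
    ultimately have "{c,x} \<in> S" unfolding S_def by blast
    then show ?thesis using \<open>c = a \<or> c = b\<close> insert_commute[of c x] by auto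
  qed
  have "card S' \<le> card S"
  proof (cases "{a,b} \<in> S'")
    case False
    then have "S' \<subseteq> S" using S1 by blast
    then show ?thesis using finS card_mono by blast
  next
    case True
    have "card S' = Suc (card (S' - {{a,b}}))" using card.remove[OF finS' True] .
    also have "\<dots> \<le> Suc (card (S - {{x,a},{x,b}}))"
      using card_mono[OF _ S1] finS by simp
    also have "\<dots> \<le> card S"
    proof -
      have "S - {{x,a},{x,b}} \<subset> S" using S2[OF True] by blast
      then have "card (S - {{x,a},{x,b}}) < card S" using finS psubset_card_mono by blast
      then show ?thesis by simp
    qed
    finally show ?thesis .
  qed
  then have "n_width_edges V f E' lab k \<le> n_width_edges V f E lab k"
    unfolding n_width_edges_def S_def S'_def by simp
  then show ?thesis using inv' w by blast
qed

lemma cleanup_inv: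
  assumes "(cleanup_step (lab ` V))\<^sup>*\<^sup>* s s'" "inv_g (lab ` V) p0 q0 (snd s)"
  shows "inv_g (lab ` V) p0 q0 (snd s') \<and> edge_widths V f (snd s') lab \<subseteq> edge_widths V f (snd s) lab
     \<and> n_width_edges V f (snd s') lab k \<le> n_width_edges V f (snd s) lab k"
  using assms
proof (induction rule: rtranclp_induct)
  case base then show ?case by simp
next
  case (step y z)
  have IH: "inv_g (lab ` V) p0 q0 (snd y)" "edge_widths V f (snd y) lab \<subseteq> edge_widths V f (snd s) lab"
     "n_width_edges V f (snd y) lab k \<le> n_width_edges V f (snd s) lab k"
    using step.IH[OF step.prems] by auto
  have "inv_g (lab ` V) p0 q0 (snd z) \<and> edge_widths V f (snd z) lab \<subseteq> edge_widths V f (snd y) lab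
     \<and> n_width_edges V f (snd z) lab k \<le> n_width_edges V f (snd y) lab k"
    using step.hyps(2) IH(1)
  proof cases
    case (delete x N E)
    have "inv_g (lab ` V) p0 q0 E" using delete IH(1) by simp
    from delete_step[OF this delete(4) delete(5), of f k] show ?thesis using delete(1,2) by simp
  next
    case (suppress x N E a b)
    have "inv_g (lab ` V) p0 q0 E" using suppress IH(1) by simp
    from suppress_step[OF this suppress(4-7), of f k] show ?thesis using suppress(1,2) by simp
  qed
  then show ?case using IH by auto
qed

lemma refinement_props:
  assumes "(cleanup_step (lab ` V))\<^sup>*\<^sup>* (N0, E0) (N', E')" "inv_g (lab ` V) p0 q0 E0" "p0 \<noteq> q0"
    "edge_widths V f E0 lab \<subseteq> {..k}"
  shows "dwidth V f E' lab \<le> k \<and> n_width_edges V f E' lab k \<le> n_width_edges V f E0 lab k"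
proof -
  have h: "inv_g (lab ` V) p0 q0 E'" "edge_widths V f E' lab \<subseteq> edge_widths V f E0 lab"
     "n_width_edges V f E' lab k \<le> n_width_edges V f E0 lab k"
    using cleanup_inv[OF assms(1)] assms(2) by auto
  have "reach E' p0 q0" using h(1) unfolding inv_g_def by blast
  then have "(p0, q0) \<in> (adj E')\<^sup>*" unfolding reach_def .
  then obtain y where "(p0, y) \<in> adj E'" using assms(3) by (metis converse_rtranclE)
  then have "{p0,y} \<in> E'" by simp
  then have ne: "f (side V E' lab p0 y) \<in> edge_widths V f E' lab" unfolding edge_widths_def by blast
  have sub: "edge_widths V f E' lab \<subseteq> {..k}" using h(2) assms(4) by blast
  have fin: "finite (edge_widths V f E' lab)" using finite_subset[OF sub] by simp
  have "dwidth V f E' lab \<le> k" unfolding dwidth_def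
    using sub fin ne by (subst Max_le_iff) auto
  then show ?thesis using h(3) by simp
qed

context
  fixes V :: "'v set" and f :: "'v set \<Rightarrow> nat"
  assumes cf: "connectivity_function V f"
begin

lemma cf_sub: "X \<subseteq> V \<Longrightarrow> Y \<subseteq> V \<Longrightarrow> f (X \<union> Y) + f (X \<inter> Y) \<le> f X + f Y"
  using cf unfolding connectivity_function_def by blast

lemma cf_sym: "X \<subseteq> V \<Longrightarrow> f (V - X) = f X"
  using cf unfolding connectivity_function_def by metis

lemma cf_empty: "f {} = 0"
  using cf unfolding connectivity_function_def by blast

lemma cf_posi:
  assumes "A \<subseteq> V" "B \<subseteq> V"
  shows "f (A - B) + f (B - A) \<le> f A + f B"
proof -
  have "f (A \<union> (V - B)) + f (A \<inter> (V - B)) \<le> f A + f (V - B)"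
    using cf_sub[of A "V - B"] assms by blast
  moreover have "A \<union> (V - B) = V - (B - A)" using assms by blast
  moreover have "A \<inter> (V - B) = A - B" using assms by blast
  moreover have "f (V - (B - A)) = f (B - A)" using cf_sym[of "B - A"] assms by blast
  moreover have "f (V - B) = f B" using cf_sym assms by blast
  ultimately show ?thesis by simp
qed

lemma improvement_parts:
  assumes "improvement V f W C1 C2 C3"
  shows "C1 \<subseteq> V" "C2 \<subseteq> V" "C3 \<subseteq> V" "C1 \<inter> C2 = {}" "C1 \<inter> C3 = {}" "C2 \<inter> C3 = {}"
    "C1 \<union> C2 \<union> C3 = V"
    "2 * f C1 < f W" "f (C1 \<inter> W) < f W" "f (C1 \<inter> (V - W)) < f W"
    "2 * f C2 < f W" "f (C2 \<inter> W) < f W" "f (C2 \<inter> (V - W)) < f W"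
    "2 * f C3 < f W" "f (C3 \<inter> W) < f W" "f (C3 \<inter> (V - W)) < f W"
  using assms unfolding improvement_def by auto

lemma improvement_intro:
  assumes "C1 \<inter> C2 = {}" "C1 \<inter> C3 = {}" "C2 \<inter> C3 = {}" "C1 \<union> C2 \<union> C3 = V"
    "2 * f C1 < f W" "f (C1 \<inter> W) < f W" "f (C1 \<inter> (V - W)) < f W"
    "2 * f C2 < f W" "f (C2 \<inter> W) < f W" "f (C2 \<inter> (V - W)) < f W"
    "2 * f C3 < f W" "f (C3 \<inter> W) < f W" "f (C3 \<inter> (V - W)) < f W"
  shows "improvement V f W C1 C2 C3"
  using assms unfolding improvement_def by simp

lemma improvement_swap12:
  assumes "improvement V f W C1 C2 C3" shows "improvement V f W C2 C1 C3"
proof -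
  note p = improvement_parts[OF assms]
  have "C2 \<union> C1 \<union> C3 = V" using p(7) by blast
  then show ?thesis using p by (intro improvement_intro) (auto simp: Int_commute)
qed

lemma improvement_swap13:
  assumes "improvement V f W C1 C2 C3" shows "improvement V f W C3 C2 C1"
proof -
  note p = improvement_parts[OF assms]
  have "C3 \<union> C2 \<union> C1 = V" using p(7) by blast
  then show ?thesis using p by (intro improvement_intro) (auto simp: Int_commute)
qed

lemma improvement_compl:
  assumes "W \<subseteq> V" "improvement V f W C1 C2 C3"
  shows "improvement V f (V - W) C1 C2 C3"
proof -
  have fW: "f (V - W) = f W" using cf_sym assms(1) by blast
  have sub: "C1 \<subseteq> V" "C2 \<subseteq> V" "C3 \<subseteq> V" using improvement_parts[OF assms(2)] by auto
  have "C \<inter> (V - (V - W)) = C \<inter> W" if "C \<subseteq> V" for C using that by blast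
  then show ?thesis using assms(2) sub fW unfolding improvement_def by auto
qed

lemma min_improvement_good1:
  assumes WV: "W \<subseteq> V" and imp: "improvement V f W C1 C2 C3"
    and min: "\<And>D1 D2 D3. improvement V f W D1 D2 D3 \<Longrightarrow> f C1 + f C2 + f C3 \<le> f D1 + f D2 + f D3"
    and XW: "X \<subseteq> W"
  shows "f (X \<inter> C1) \<le> f X"
proof (rule ccontr)
  assume "\<not> f (X \<inter> C1) \<le> f X"
  then have bad: "f X < f (X \<inter> C1)" by simp
  define P where "P = X \<inter> C1"
  have ex0: "X \<subseteq> X \<and> X \<inter> C1 = P" unfolding P_def by simp
  obtain Z where Z0: "(Z \<subseteq> X \<and> Z \<inter> C1 = P) \<and> (\<forall>Y. Y \<subseteq> X \<and> Y \<inter> C1 = P \<longrightarrow> f Z \<le> f Y)"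
    using ex_has_least_nat[of "\<lambda>Z. Z \<subseteq> X \<and> Z \<inter> C1 = P" X f, OF ex0] by (elim exE)
  have Z: "Z \<subseteq> X" "Z \<inter> C1 = P" using Z0 by auto
  have Zmin: "\<And>Y. Y \<subseteq> X \<Longrightarrow> Y \<inter> C1 = P \<Longrightarrow> f Z \<le> f Y" using Z0 by auto
  have fZ: "f Z < f P" using Zmin[of X] bad unfolding P_def by simp
  note pt = improvement_parts[OF imp]
  have ZV: "Z \<subseteq> V" "Z \<subseteq> W" using Z XW WV by auto
  define D1 where "D1 = C1 \<union> Z"
  define D2 where "D2 = C2 - Z"
  define D3 where "D3 = C3 - Z"
  have e1: "f D1 + f P \<le> f C1 + f Z"
  proof -
    have "C1 \<inter> Z = P" using Z by blast
    then show ?thesis using cf_sub[of C1 Z] pt ZV unfolding D1_def by simp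
  qed
  have e2: "f (D1 \<inter> W) + f P \<le> f (C1 \<inter> W) + f Z"
  proof -
    have eqs: "(C1 \<inter> W) \<inter> Z = P" "D1 \<inter> W = (C1 \<inter> W) \<union> Z" using Z ZV unfolding D1_def by blast+
    have "C1 \<inter> W \<subseteq> V" using pt by blast
    from cf_sub[OF this ZV(1)] show ?thesis using eqs by simp
  qed
  have e3: "D1 \<inter> (V - W) = C1 \<inter> (V - W)" unfolding D1_def using ZV by blast
  have gen: "f (C - Z) \<le> f C \<and> f ((C - Z) \<inter> W) \<le> f (C \<inter> W) \<and> (C - Z) \<inter> (V - W) = C \<inter> (V - W)"
    if CV: "C \<subseteq> V" and C1C: "C1 \<inter> C = {}" for C
  proof (intro conjI)
    have zc: "Z - C \<subseteq> X" "(Z - C) \<inter> C1 = P" using Z C1C by blast+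
    have le: "f Z \<le> f (Z - C)" using Zmin[OF zc] .
    show "f (C - Z) \<le> f C" using cf_posi[OF CV ZV(1)] le by simp
    have "Z - (C \<inter> W) = Z - C" using ZV by blast
    moreover have "(C - Z) \<inter> W = (C \<inter> W) - Z" by blast
    moreover have "C \<inter> W \<subseteq> V" using CV by blast
    ultimately show "f ((C - Z) \<inter> W) \<le> f (C \<inter> W)"
      using cf_posi[of "C \<inter> W" Z] ZV le by simp
    show "(C - Z) \<inter> (V - W) = C \<inter> (V - W)" using ZV by blast
  qed
  have g2: "f D2 \<le> f C2" "f (D2 \<inter> W) \<le> f (C2 \<inter> W)" "D2 \<inter> (V - W) = C2 \<inter> (V - W)"
    using gen[of C2] pt unfolding D2_def by auto
  have g3: "f D3 \<le> f C3" "f (D3 \<inter> W) \<le> f (C3 \<inter> W)" "D3 \<inter> (V - W) = C3 \<inter> (V - W)"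
    using gen[of C3] pt unfolding D3_def by auto
  have impD: "improvement V f W D1 D2 D3"
    unfolding improvement_def
  proof (intro conjI)
    show "D1 \<inter> D2 = {}" "D1 \<inter> D3 = {}" "D2 \<inter> D3 = {}" unfolding D1_def D2_def D3_def using pt by blast+
    show "D1 \<union> D2 \<union> D3 = V" unfolding D1_def D2_def D3_def using pt ZV by blast
    have d1: "2 * f D1 < f W" "f (D1 \<inter> W) < f W" "f (D1 \<inter> (V - W)) < f W"
      using e1 e2 e3 pt(8,9,10) fZ by simp_all
    have d2: "2 * f D2 < f W" "f (D2 \<inter> W) < f W" "f (D2 \<inter> (V - W)) < f W"
      using g2 pt(11,12,13) by simp_all
    have d3: "2 * f D3 < f W" "f (D3 \<inter> W) < f W" "f (D3 \<inter> (V - W)) < f W"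
      using g3 pt(14,15,16) by simp_all
    show "\<forall>C\<in>{D1, D2, D3}. 2 * f C < f W \<and> f (C \<inter> W) < f W \<and> f (C \<inter> (V - W)) < f W"
      using d1 d2 d3 by simp
  qed
  have "f D1 + f D2 + f D3 < f C1 + f C2 + f C3" using e1 g2 g3 fZ by simp
  then show False using min[OF impD] by simp
qed

lemma min_improvement_good:
  assumes WV: "W \<subseteq> V" and imp: "improvement V f W C1 C2 C3"
    and min: "\<And>D1 D2 D3. improvement V f W D1 D2 D3 \<Longrightarrow> f C1 + f C2 + f C3 \<le> f D1 + f D2 + f D3"
    and XW: "X \<subseteq> W \<or> X \<subseteq> V - W"
  shows "f (X \<inter> C1) \<le> f X" "f (X \<inter> C2) \<le> f X" "f (X \<inter> C3) \<le> f X"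
proof -
  have m2: "f C2 + f C1 + f C3 \<le> f D1 + f D2 + f D3" if "improvement V f W D1 D2 D3" for D1 D2 D3
    using min[OF that] by simp
  have m3: "f C3 + f C2 + f C1 \<le> f D1 + f D2 + f D3" if "improvement V f W D1 D2 D3" for D1 D2 D3
    using min[OF that] by simp
  have all: "f (X \<inter> C1) \<le> f X \<and> f (X \<inter> C2) \<le> f X \<and> f (X \<inter> C3) \<le> f X"
    if WV: "W \<subseteq> V" and imp: "improvement V f W C1 C2 C3"
    and min: "\<And>D1 D2 D3. improvement V f W D1 D2 D3 \<Longrightarrow> f C1 + f C2 + f C3 \<le> f D1 + f D2 + f D3"
    and XW: "X \<subseteq> W" for W
  proof -
    have m2: "f C2 + f C1 + f C3 \<le> f D1 + f D2 + f D3" if "improvement V f W D1 D2 D3" for D1 D2 D3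
      using min[OF that] by simp
    have m3: "f C3 + f C2 + f C1 \<le> f D1 + f D2 + f D3" if "improvement V f W D1 D2 D3" for D1 D2 D3
      using min[OF that] by simp
    show ?thesis
      using min_improvement_good1[OF WV imp min XW]
        min_improvement_good1[OF WV improvement_swap12[OF imp] m2 XW]
        min_improvement_good1[OF WV improvement_swap13[OF imp] m3 XW] by simp
  qed
  have "f (X \<inter> C1) \<le> f X \<and> f (X \<inter> C2) \<le> f X \<and> f (X \<inter> C3) \<le> f X"
  proof (cases "X \<subseteq> W")
    case True then show ?thesis using all[OF WV imp min] by blast
  next
    case False
    then have XW': "X \<subseteq> V - W" using XW by blast
    have imp': "improvement V f (V - W) C1 C2 C3" using improvement_compl[OF WV imp] .
    have min': "f C1 + f C2 + f C3 \<le> f D1 + f D2 + f D3" if "improvement V f (V - W) D1 D2 D3" for D1 D2 D3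
    proof -
      have "V - (V - W) = W" using WV by blast
      then have "improvement V f W D1 D2 D3" using improvement_compl[OF _ that] by (metis Diff_subset)
      then show ?thesis by (rule min)
    qed
    show ?thesis using all[OF _ imp' min' XW'] by blast
  qed
  then show "f (X \<inter> C1) \<le> f X" "f (X \<inter> C2) \<le> f X" "f (X \<inter> C3) \<le> f X" by auto
qed

lemma two_parts_bound:
  assumes "X \<subseteq> V" "A \<subseteq> V" "B \<subseteq> V" "A \<inter> B = {}" "2 * f A < fW" "2 * f B < fW"
    "f X \<le> f (X \<inter> A)" "f X \<le> f (X \<inter> B)"
  shows "f X < fW"
proof -
  have a: "f (X \<union> A) \<le> f A" using cf_sub[of X A] assms by simp
  have b: "f (X \<union> B) \<le> f B" using cf_sub[of X B] assms by simp
  have "(X \<union> A) \<inter> (X \<union> B) = X" using assms(4) by blast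
  then have "f ((X \<union> A) \<union> (X \<union> B)) + f X \<le> f (X \<union> A) + f (X \<union> B)"
    using cf_sub[of "X \<union> A" "X \<union> B"] assms by (metis le_sup_iff)
  then show ?thesis using a b assms(5,6) by linarith
qed

end

definition CC :: "'v set \<Rightarrow> 'v set \<Rightarrow> 'v set \<Rightarrow> nat \<Rightarrow> 'v set" where
  "CC C1 C2 C3 i = (if i = 1 then C1 else if i = 2 then C2 else C3)"

lemma lift:
  assumes "reach E' a z" "\<And>y z. reach E' a y \<Longrightarrow> {y,z} \<in> E' \<Longrightarrow> reach G (Cp i y) (Cp i z)"
  shows "reach G (Cp i a) (Cp i z)"
  using assms(1)
proof (induction rule: reach_induct)
  case refl show ?case by simp
next
  case (step y z) show ?case using reach_trans[OF step.IH assms(2)[OF step.hyps]] .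
qed

lemma side_compl:
  assumes "\<not> reach (G - {{c,d}}) c d" "\<And>y. y \<in> V \<Longrightarrow> reach G c (lab y)"
  shows "side V G lab d c = V - side V G lab c d"
proof -
  have eq: "{{d,c}} = {{c,d}}" by (simp only: insert_commute[of d c])
  have "reach (G - {{c,d}}) d (lab y) \<longleftrightarrow> \<not> reach (G - {{c,d}}) c (lab y)" if "y \<in> V" for y
    using split_reach[OF assms(2)[OF that], of d] split_reach_disj[OF assms(1)] by blast
  then show ?thesis unfolding side_def eq by auto
qed

locale rs =
  fixes V :: "'v set" and N :: "'n set" and E :: "'n set set" and L :: "'v \<Rightarrow> 'n"
    and u v :: 'n and C1 C2 C3 :: "'v set"
  assumes bd: "branch_decomposition V N E L"
    and uvE: "{u,v} \<in> E"
    and part: "C1 \<inter> C2 = {}" "C1 \<inter> C3 = {}" "C2 \<inter> C3 = {}" "C1 \<union> C2 \<union> C3 = V"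
begin

lemma T_graph: "finite N" "\<And>e. e \<in> E \<Longrightarrow> e \<subseteq> N \<and> card e = 2"
  using bd unfolding branch_decomposition_def tree_def graph_def by auto

lemma T_conn: "a \<in> N \<Longrightarrow> b \<in> N \<Longrightarrow> reach E a b"
  using bd unfolding branch_decomposition_def tree_def by blast

lemma T_bridge: "{a,b} \<in> E \<Longrightarrow> \<not> reach (E - {{a,b}}) a b"
  using bd unfolding branch_decomposition_def tree_def by blast

lemma T_edge: "e \<in> E \<Longrightarrow> \<exists>c d. c \<noteq> d \<and> e = {c,d}"
  using T_graph(2)[of e] by (auto simp: card_2_iff)

lemma T_edgeN: "{a,b} \<in> E \<Longrightarrow> a \<in> N \<and> b \<in> N"
  using T_graph(2) by blast

lemma T_ne: "{a,b} \<in> E \<Longrightarrow> a \<noteq> b"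
  using T_graph(2)[of "{a,b}"] by auto

lemma T_finE: "finite E"
proof -
  have "E \<subseteq> Pow N" using T_graph(2) by blast
  then show ?thesis using T_graph(1) finite_subset by blast
qed

lemma L_bij: "bij_betw L V (leaves N E)"
  using bd unfolding branch_decomposition_def by blast

lemma L_N: "y \<in> V \<Longrightarrow> L y \<in> N"
  using L_bij unfolding bij_betw_def leaves_def by blast

lemma L_deg: "y \<in> V \<Longrightarrow> deg E (L y) = 1"
  using L_bij unfolding bij_betw_def leaves_def by blast

lemma L_inj: "inj_on L V"
  using L_bij unfolding bij_betw_def by blast

lemma uvN: "u \<in> N" "v \<in> N" using T_edgeN[OF uvE] by auto

lemma uv_ne: "u \<noteq> v" using T_ne[OF uvE] .

abbreviation "E0 \<equiv> ref_edges E u v"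
abbreviation "lab \<equiv> ref_label L C1 C2"
abbreviation "Ci \<equiv> CC C1 C2 C3"

lemma CC_sub: "Ci i \<subseteq> V" using part unfolding CC_def by auto

lemma lab_eq:
  assumes "y \<in> V" "i \<in> {1,2,3}"
  shows "lab y = Cp i z \<longleftrightarrow> y \<in> Ci i \<and> z = L y"
  using assms part unfolding ref_label_def CC_def by auto

lemma lab_cases: "y \<in> V \<Longrightarrow> \<exists>i\<in>{1,2,3}. lab y = Cp i (L y) \<and> y \<in> Ci i"
  using part unfolding ref_label_def CC_def by auto

lemma E0_cases:
  assumes "e \<in> E0"
  shows "(\<exists>i a b. i \<in> {1,2,3} \<and> {a,b} \<in> E \<and> {a,b} \<noteq> {u,v} \<and> e = {Cp i a, Cp i b})
    \<or> (\<exists>i\<in>{1,2,3}. e = {Cp i u, Sub i} \<or> e = {Sub i, Cp i v} \<or> e = {Sub i, Ctr})"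
  using assms unfolding ref_edges_def by blast

lemma E0_type1: "{a,b} \<in> E \<Longrightarrow> {a,b} \<noteq> {u,v} \<Longrightarrow> i \<in> {1,2,3} \<Longrightarrow> {Cp i a, Cp i b} \<in> E0"
  unfolding ref_edges_def by blast

lemma E0_type2: "i \<in> {1,2,3} \<Longrightarrow> {Cp i u, Sub i} \<in> E0 \<and> {Sub i, Cp i v} \<in> E0 \<and> {Sub i, Ctr} \<in> E0"
  unfolding ref_edges_def by blast

lemma N1:
  assumes "{Cp i z, w} \<in> E0"
  shows "(\<exists>z'. w = Cp i z' \<and> {z,z'} \<in> E \<and> {z,z'} \<noteq> {u,v}) \<or> (w = Sub i \<and> (z = u \<or> z = v))"
  using E0_cases[OF assms]
proof (elim disjE exE conjE bexE)
  fix j a b assume h: "j \<in> {1,2,3}" "{a,b} \<in> E" "{a,b} \<noteq> {u,v}" "{Cp i z, w} = {Cp j a, Cp j b}"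
  then have "(z = a \<and> w = Cp i b \<and> i = j) \<or> (z = b \<and> w = Cp i a \<and> i = j)"
    by (auto simp: doubleton_eq_iff)
  then show ?thesis
  proof
    assume "z = a \<and> w = Cp i b \<and> i = j" then show ?thesis using h by blast
  next
    assume "z = b \<and> w = Cp i a \<and> i = j"
    moreover have "{b,a} = {a,b}" by (rule insert_commute)
    ultimately show ?thesis using h by (metis)
  qed
next
  fix j assume "j \<in> {1,2,3}" "{Cp i z, w} = {Cp j u, Sub j}" then show ?thesis by (auto simp: doubleton_eq_iff)
next
  fix j assume "j \<in> {1,2,3}" "{Cp i z, w} = {Sub j, Cp j v}" then show ?thesis by (auto simp: doubleton_eq_iff)
next
  fix j assume "j \<in> {1,2,3}" "{Cp i z, w} = {Sub j, Ctr}" then show ?thesis by (auto simp: doubleton_eq_iff)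
qed

lemma N2:
  assumes "{Sub i, w} \<in> E0"
  shows "w = Cp i u \<or> w = Cp i v \<or> w = Ctr"
  using E0_cases[OF assms] by (auto simp: doubleton_eq_iff)


lemma comp1:
  assumes ab: "{a,b} \<in> E" "{a,b} \<noteq> {u,v}" and i: "i \<in> {1,2,3}" and nu: "\<not> reach (E - {{a,b}}) a u"
  shows "reach (E0 - {{Cp i a, Cp i b}}) (Cp i a) w \<longleftrightarrow> (\<exists>z. w = Cp i z \<and> reach (E - {{a,b}}) a z)"
proof -
  have nv: "\<not> reach (E - {{a,b}}) a v"
  proof
    assume "reach (E - {{a,b}}) a v"
    moreover have "{v,u} \<in> E - {{a,b}}" using uvE ab(2) insert_commute[of v u] by auto
    ultimately show False using nu reach_edge_step by metis
  qed
  show ?thesis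
  proof
    assume r: "reach (E0 - {{Cp i a, Cp i b}}) (Cp i a) w"
    let ?S = "{Cp i z | z. reach (E - {{a,b}}) a z}"
    have "w \<in> ?S"
    proof (rule reach_closed[OF r])
      show "Cp i a \<in> ?S" by auto
      fix y' w' assume e: "{y',w'} \<in> E0 - {{Cp i a, Cp i b}}" and y': "y' \<in> ?S"
      then obtain z where z: "y' = Cp i z" "reach (E - {{a,b}}) a z" by blast
      have "{Cp i z, w'} \<in> E0" using e z by simp
      from N1[OF this] show "w' \<in> ?S"
      proof
        assume "\<exists>z'. w' = Cp i z' \<and> {z,z'} \<in> E \<and> {z,z'} \<noteq> {u,v}"
        then obtain z' where h: "w' = Cp i z'" "{z,z'} \<in> E" "{z,z'} \<noteq> {u,v}" by blast
        have "{Cp i z, Cp i z'} \<noteq> {Cp i a, Cp i b}" using e z h by simp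
        then have "{z,z'} \<noteq> {a,b}" by (auto simp: doubleton_eq_iff)
        then have "{z,z'} \<in> E - {{a,b}}" using h by simp
        then have "reach (E - {{a,b}}) a z'" using z(2) reach_edge_step by metis
        then show ?thesis using h by blast
      next
        assume "w' = Sub i \<and> (z = u \<or> z = v)"
        then show ?thesis using z nu nv by blast
      qed
    qed
    then show "\<exists>z. w = Cp i z \<and> reach (E - {{a,b}}) a z" by blast
  next
    assume "\<exists>z. w = Cp i z \<and> reach (E - {{a,b}}) a z"
    then obtain z where z: "w = Cp i z" "reach (E - {{a,b}}) a z" by blast
    have "reach (E0 - {{Cp i a, Cp i b}}) (Cp i a) (Cp i z)"
    proof (rule lift[OF z(2)])
      fix y z' assume y: "reach (E - {{a,b}}) a y" and e: "{y,z'} \<in> E - {{a,b}}"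
      have "y \<noteq> u" "y \<noteq> v" using y nu nv by auto
      then have "{y,z'} \<noteq> {u,v}" by (auto simp: doubleton_eq_iff)
      then have "{Cp i y, Cp i z'} \<in> E0" using E0_type1 e i by auto
      moreover have "{Cp i y, Cp i z'} \<noteq> {Cp i a, Cp i b}" using e by (auto simp: doubleton_eq_iff)
      ultimately show "reach (E0 - {{Cp i a, Cp i b}}) (Cp i y) (Cp i z')" by (intro reach_edge) simp
    qed
    then show "reach (E0 - {{Cp i a, Cp i b}}) (Cp i a) w" using z by simp
  qed
qed

lemma side1:
  assumes ab: "{a,b} \<in> E" "{a,b} \<noteq> {u,v}" and i: "i \<in> {1,2,3}" and nu: "\<not> reach (E - {{a,b}}) a u"
  shows "side V E0 lab (Cp i a) (Cp i b) = Ci i \<inter> side V E L a b"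
    and "\<not> reach (E0 - {{Cp i a, Cp i b}}) (Cp i a) (Cp i b)"
proof -
  note c = comp1[OF ab i nu]
  have "reach (E0 - {{Cp i a, Cp i b}}) (Cp i a) (lab y) \<longleftrightarrow> y \<in> Ci i \<and> reach (E - {{a,b}}) a (L y)"
    if "y \<in> V" for y
    unfolding c using lab_eq[OF that i] by auto
  then show "side V E0 lab (Cp i a) (Cp i b) = Ci i \<inter> side V E L a b"
    unfolding side_def using CC_sub by auto
  show "\<not> reach (E0 - {{Cp i a, Cp i b}}) (Cp i a) (Cp i b)"
    unfolding c using T_bridge[OF ab(1)] by simp
qed

lemma comp2:
  assumes pq: "(p = u \<and> q = v) \<or> (p = v \<and> q = u)" and i: "i \<in> {1,2,3}"
  shows "reach (E0 - {{Cp i p, Sub i}}) (Cp i p) w \<longleftrightarrow> (\<exists>z. w = Cp i z \<and> reach (E - {{u,v}}) p z)"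
proof -
  have nq: "\<not> reach (E - {{u,v}}) p q" using T_bridge[OF uvE] pq reach_sym by metis
  show ?thesis
  proof
    assume r: "reach (E0 - {{Cp i p, Sub i}}) (Cp i p) w"
    let ?S = "{Cp i z | z. reach (E - {{u,v}}) p z}"
    have "w \<in> ?S"
    proof (rule reach_closed[OF r])
      show "Cp i p \<in> ?S" by auto
      fix y' w' assume e: "{y',w'} \<in> E0 - {{Cp i p, Sub i}}" and y': "y' \<in> ?S"
      then obtain z where z: "y' = Cp i z" "reach (E - {{u,v}}) p z" by blast
      have "{Cp i z, w'} \<in> E0" using e z by simp
      from N1[OF this] show "w' \<in> ?S"
      proof
        assume "\<exists>z'. w' = Cp i z' \<and> {z,z'} \<in> E \<and> {z,z'} \<noteq> {u,v}"
        then obtain z' where h: "w' = Cp i z'" "{z,z'} \<in> E" "{z,z'} \<noteq> {u,v}" by blast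
        then have "{z,z'} \<in> E - {{u,v}}" by simp
        then have "reach (E - {{u,v}}) p z'" using z(2) reach_edge_step by metis
        then show ?thesis using h by blast
      next
        assume "w' = Sub i \<and> (z = u \<or> z = v)"
        then have h: "w' = Sub i" "z = u \<or> z = v" by auto
        show ?thesis
        proof (cases "z = p")
          case True then show ?thesis using e z h by simp
        next
          case False then have "z = q" using h pq by auto
          then show ?thesis using z nq by simp
        qed
      qed
    qed
    then show "\<exists>z. w = Cp i z \<and> reach (E - {{u,v}}) p z" by blast
  next
    assume "\<exists>z. w = Cp i z \<and> reach (E - {{u,v}}) p z"
    then obtain z where z: "w = Cp i z" "reach (E - {{u,v}}) p z" by blast
    have "reach (E0 - {{Cp i p, Sub i}}) (Cp i p) (Cp i z)"
    proof (rule lift[OF z(2)])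
      fix y z' assume e: "{y,z'} \<in> E - {{u,v}}"
      then have "{Cp i y, Cp i z'} \<in> E0" using E0_type1 i by auto
      moreover have "{Cp i y, Cp i z'} \<noteq> {Cp i p, Sub i}" by (auto simp: doubleton_eq_iff)
      ultimately show "reach (E0 - {{Cp i p, Sub i}}) (Cp i y) (Cp i z')" by (intro reach_edge) simp
    qed
    then show "reach (E0 - {{Cp i p, Sub i}}) (Cp i p) w" using z by simp
  qed
qed

lemma side2:
  assumes pq: "(p = u \<and> q = v) \<or> (p = v \<and> q = u)" and i: "i \<in> {1,2,3}"
  shows "side V E0 lab (Cp i p) (Sub i) = Ci i \<inter> side V E L p q"
    and "\<not> reach (E0 - {{Cp i p, Sub i}}) (Cp i p) (Sub i)"
proof -
  note c = comp2[OF pq i]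
  have eq: "{{p,q}} = {{u,v}}" using pq insert_commute[of v u] by auto
  have "reach (E0 - {{Cp i p, Sub i}}) (Cp i p) (lab y) \<longleftrightarrow> y \<in> Ci i \<and> reach (E - {{u,v}}) p (L y)"
    if "y \<in> V" for y
    unfolding c using lab_eq[OF that i] by auto
  then show "side V E0 lab (Cp i p) (Sub i) = Ci i \<inter> side V E L p q"
    unfolding side_def eq using CC_sub by auto
  show "\<not> reach (E0 - {{Cp i p, Sub i}}) (Cp i p) (Sub i)"
    unfolding c by simp
qed

lemma liftT:
  assumes "reach E a z" "i \<in> {1,2,3}"
    "\<And>c d. {c,d} \<in> E \<Longrightarrow> {c,d} \<noteq> {u,v} \<Longrightarrow> {Cp i c, Cp i d} \<in> G"
    "{Cp i u, Sub i} \<in> G" "{Sub i, Cp i v} \<in> G"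
  shows "reach G (Cp i a) (Cp i z)"
proof (rule lift[OF assms(1)])
  fix y z' assume e: "{y,z'} \<in> E"
  show "reach G (Cp i y) (Cp i z')"
  proof (cases "{y,z'} = {u,v}")
    case True
    have "reach G (Cp i u) (Sub i)" "reach G (Sub i) (Cp i v)" using assms(4,5) reach_edge by metis+
    then have uv: "reach G (Cp i u) (Cp i v)" by (rule reach_trans)
    from True have "(y = u \<and> z' = v) \<or> (y = v \<and> z' = u)" by (auto simp: doubleton_eq_iff)
    then show ?thesis using uv reach_sym[OF uv] by auto
  next
    case False
    then show ?thesis using assms(3)[OF e False] reach_edge by metis
  qed
qed

lemma comp4:
  assumes i: "i \<in> {1,2,3}"
  shows "reach (E0 - {{Sub i, Ctr}}) (Sub i) w \<longleftrightarrow> w \<in> insert (Sub i) (Cp i ` N)"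
proof
  assume r: "reach (E0 - {{Sub i, Ctr}}) (Sub i) w"
  show "w \<in> insert (Sub i) (Cp i ` N)"
  proof (rule reach_closed[OF r])
    show "Sub i \<in> insert (Sub i) (Cp i ` N)" by simp
    fix y' w' assume e: "{y',w'} \<in> E0 - {{Sub i, Ctr}}" and y': "y' \<in> insert (Sub i) (Cp i ` N)"
    show "w' \<in> insert (Sub i) (Cp i ` N)"
    proof (cases "y' = Sub i")
      case True
      then have "w' = Cp i u \<or> w' = Cp i v \<or> w' = Ctr" using N2[of i w'] e by simp
      moreover have "w' \<noteq> Ctr" using e True by auto
      ultimately show ?thesis using uvN by auto
    next
      case False
      then obtain z where z: "y' = Cp i z" "z \<in> N" using y' by auto
      have "{Cp i z, w'} \<in> E0" using e z by simp
      from N1[OF this] show ?thesis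
      proof
        assume "\<exists>z'. w' = Cp i z' \<and> {z,z'} \<in> E \<and> {z,z'} \<noteq> {u,v}"
        then obtain z' where h: "w' = Cp i z'" "{z,z'} \<in> E" "{z,z'} \<noteq> {u,v}" by blast
        then show ?thesis using T_edgeN[OF h(2)] by simp
      next
        assume "w' = Sub i \<and> (z = u \<or> z = v)" then show ?thesis by simp
      qed
    qed
  qed
next
  assume w: "w \<in> insert (Sub i) (Cp i ` N)"
  show "reach (E0 - {{Sub i, Ctr}}) (Sub i) w"
  proof (cases "w = Sub i")
    case True then show ?thesis by simp
  next
    case False
    then obtain z where z: "w = Cp i z" "z \<in> N" using w by auto
    have t2: "{Cp i u, Sub i} \<in> E0 - {{Sub i, Ctr}}" "{Sub i, Cp i v} \<in> E0 - {{Sub i, Ctr}}"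
      using E0_type2[OF i] by (simp_all add: doubleton_eq_iff)
    have "reach (E0 - {{Sub i, Ctr}}) (Cp i u) (Cp i z)"
    proof (rule liftT[OF T_conn[OF uvN(1) z(2)] i _ t2])
      fix c d assume "{c,d} \<in> E" "{c,d} \<noteq> {u,v}"
      then show "{Cp i c, Cp i d} \<in> E0 - {{Sub i, Ctr}}" using E0_type1[OF _ _ i] by (simp add: doubleton_eq_iff)
    qed
    moreover have "reach (E0 - {{Sub i, Ctr}}) (Sub i) (Cp i u)"
      using t2(1) reach_edge reach_sym by metis
    ultimately show ?thesis using z reach_trans[of "E0 - {{Sub i, Ctr}}" "Sub i" "Cp i u" "Cp i z"] by simp
  qed
qed

lemma side4:
  assumes i: "i \<in> {1,2,3}"
  shows "side V E0 lab (Sub i) Ctr = Ci i"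
    and "\<not> reach (E0 - {{Sub i, Ctr}}) (Sub i) Ctr"
proof -
  note c = comp4[OF i]
  have "reach (E0 - {{Sub i, Ctr}}) (Sub i) (lab y) \<longleftrightarrow> y \<in> Ci i" if yV: "y \<in> V" for y
  proof -
    obtain j where j: "j \<in> {1,2,3}" "lab y = Cp j (L y)" "y \<in> Ci j" using lab_cases[OF yV] by blast
    have "lab y \<in> insert (Sub i) (Cp i ` N) \<longleftrightarrow> y \<in> Ci i"
    proof
      assume "lab y \<in> insert (Sub i) (Cp i ` N)"
      then have "i = j" using j(2) by auto
      then show "y \<in> Ci i" using j by simp
    next
      assume "y \<in> Ci i"
      then have "lab y = Cp i (L y)" using lab_eq[OF yV i] by simp
      then show "lab y \<in> insert (Sub i) (Cp i ` N)" using L_N[OF yV] by simp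
    qed
    then show ?thesis unfolding c .
  qed
  then show "side V E0 lab (Sub i) Ctr = Ci i"
    unfolding side_def using CC_sub by auto
  show "\<not> reach (E0 - {{Sub i, Ctr}}) (Sub i) Ctr"
    unfolding c by auto
qed

end

context rs begin

lemma conn_Cp: "i \<in> {1,2,3} \<Longrightarrow> z \<in> N \<Longrightarrow> reach E0 Ctr (Cp i z)"
proof -
  assume i: "i \<in> {1,2,3}" and z: "z \<in> N"
  note t2 = E0_type2[OF i]
  have r1: "reach E0 Ctr (Sub i)" using t2 reach_edge reach_sym by metis
  have r2: "reach E0 (Sub i) (Cp i u)" using t2 reach_edge reach_sym by metis
  have r3: "reach E0 (Cp i u) (Cp i z)"
    by (rule liftT[OF T_conn[OF uvN(1) z] i]) (use E0_type1[OF _ _ i] t2 in auto)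
  show ?thesis using reach_trans[OF reach_trans[OF r1 r2] r3] .
qed

lemma conn_Sub: "i \<in> {1,2,3} \<Longrightarrow> reach E0 Ctr (Sub i)"
  using E0_type2 reach_edge reach_sym by metis

lemma conn_node: assumes "e \<in> E0" "c \<in> e" shows "reach E0 Ctr c"
  using E0_cases[OF assms(1)]
proof (elim disjE exE conjE bexE)
  fix i a b assume h: "i \<in> {1,2,3}" "{a,b} \<in> E" "{a,b} \<noteq> {u,v}" "e = {Cp i a, Cp i b}"
  then have "c = Cp i a \<or> c = Cp i b" using assms(2) by auto
  then show ?thesis using conn_Cp[OF h(1)] T_edgeN[OF h(2)] by auto
next
  fix i assume "i \<in> {1,2,3}" "e = {Cp i u, Sub i}"
  then show ?thesis using assms(2) conn_Cp conn_Sub uvN by auto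
next
  fix i assume "i \<in> {1,2,3}" "e = {Sub i, Cp i v}"
  then show ?thesis using assms(2) conn_Cp conn_Sub uvN by auto
next
  fix i assume "i \<in> {1,2,3}" "e = {Sub i, Ctr}"
  then show ?thesis using assms(2) conn_Sub by auto
qed

lemma conn_lab: "y \<in> V \<Longrightarrow> reach E0 Ctr (lab y)"
  using lab_cases conn_Cp L_N by metis

lemma conn_all: assumes "{c,d} \<in> E0" "y \<in> V" shows "reach E0 c (lab y)"
proof -
  have "reach E0 Ctr c" using conn_node[OF assms(1)] by simp
  then show ?thesis using reach_trans[OF reach_sym conn_lab[OF assms(2)]] by blast
qed

lemma T_compl: assumes "{a,b} \<in> E" shows "side V E L b a = V - side V E L a b"
proof (rule side_compl)
  show "\<not> reach (E - {{a, b}}) a b" using T_bridge[OF assms] .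
  fix y assume "y \<in> V" then show "reach E a (L y)" using T_conn T_edgeN[OF assms] L_N by blast
qed

lemma side_sub: "side V G lab' c d \<subseteq> V" unfolding side_def by auto

definition Yf :: "'n \<Rightarrow> 'n \<Rightarrow> 'v set" where
  "Yf a b = (if reach (E - {{a,b}}) a u then side V E L b a else side V E L a b)"

lemma Yf_sub: "Yf a b \<subseteq> V" unfolding Yf_def side_def by auto

lemma ab_comm: "{b,a} = {a,b}" by (rule insert_commute)

lemma other_side:
  assumes "{a,b} \<in> E" "reach (E - {{a,b}}) a u"
  shows "\<not> reach (E - {{b,a}}) b u"
  using split_reach_disj[OF T_bridge[OF assms(1)] assms(2)] ab_comm[of b a] by simp

lemma one_side:
  assumes "{a,b} \<in> E" "\<not> reach (E - {{a,b}}) a u"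
  shows "reach (E - {{b,a}}) b u"
  using split_reach[OF T_conn[OF _ uvN(1)], of a b] T_edgeN[OF assms(1)] assms(2) ab_comm[of b a] by auto

lemma Yf_sym: assumes "{a,b} \<in> E" shows "Yf b a = Yf a b"
proof (cases "reach (E - {{a,b}}) a u")
  case True
  then have "\<not> reach (E - {{b,a}}) b u" using other_side[OF assms] by simp
  then show ?thesis unfolding Yf_def using True by simp
next
  case False
  then have "reach (E - {{b,a}}) b u" using one_side[OF assms] by simp
  then show ?thesis unfolding Yf_def using False by simp
qed

lemma Yf_far:
  assumes "{a,b} \<in> E"
  shows "\<exists>p q. ((p = a \<and> q = b) \<or> (p = b \<and> q = a)) \<and> Yf a b = side V E L p q \<and> \<not> reach (E - {{p,q}}) p u"
proof (cases "reach (E - {{a,b}}) a u")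
  case True
  then show ?thesis using other_side[OF assms True] unfolding Yf_def by auto
next
  case False
  then show ?thesis unfolding Yf_def by auto
qed

lemma avoid_uv:
  assumes pq: "{p,q} \<in> E" "{p,q} \<noteq> {u,v}" and nu: "\<not> reach (E - {{p,q}}) p u"
    and r: "reach (E - {{p,q}}) p z"
  shows "reach (E - {{u,v}}) p z"
proof -
  have nv: "\<not> reach (E - {{p,q}}) p v"
  proof
    assume "reach (E - {{p,q}}) p v"
    moreover have "{v,u} \<in> E - {{p,q}}" using uvE pq(2) ab_comm[of v u] by auto
    ultimately show False using nu reach_edge_step by metis
  qed
  show ?thesis using r
  proof (induction rule: reach_induct)
    case refl then show ?case by simp
  next
    case (step y z)
    have "y \<noteq> u" "y \<noteq> v" using step.hyps(1) nu nv by auto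
    then have "{y,z} \<in> E - {{u,v}}" using step.hyps(2) by (auto simp: doubleton_eq_iff)
    then show ?case using step.IH reach_edge_step by metis
  qed
qed

lemma Yf_WW:
  assumes ab: "{a,b} \<in> E" "{a,b} \<noteq> {u,v}"
  shows "Yf a b \<subseteq> side V E L u v \<or> Yf a b \<subseteq> V - side V E L u v"
proof -
  obtain p q where pq: "(p = a \<and> q = b) \<or> (p = b \<and> q = a)" "Yf a b = side V E L p q"
    "\<not> reach (E - {{p,q}}) p u" using Yf_far[OF ab(1)] by blast
  have "{p,q} = {a,b}" using pq(1) by (simp add: doubleton_eq_iff)
  then have pqE: "{p,q} \<in> E" "{p,q} \<noteq> {u,v}" using ab by simp_all
  have pN: "p \<in> N" using T_edgeN[OF pqE(1)] by simp
  have in_uv: "reach (E - {{u,v}}) p (L y)" if "y \<in> Yf a b" for y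
  proof -
    have "reach (E - {{p,q}}) p (L y)" using that unfolding pq(2) side_def by simp
    then show ?thesis using avoid_uv[OF pqE pq(3)] by simp
  qed
  have yV: "y \<in> V" if "y \<in> Yf a b" for y using that Yf_sub by blast
  have "reach (E - {{u,v}}) u p \<or> reach (E - {{u,v}}) v p"
    using split_reach[OF T_conn[OF uvN(1) pN]] .
  then show ?thesis
  proof
    assume up: "reach (E - {{u,v}}) u p"
    have "y \<in> side V E L u v" if "y \<in> Yf a b" for y
    proof -
      have "reach (E - {{u,v}}) u (L y)" using reach_trans[OF up in_uv[OF that]] .
      then show ?thesis unfolding side_def using yV[OF that] by simp
    qed
    then have "Yf a b \<subseteq> side V E L u v" by (rule subsetI)
    then show ?thesis by (rule disjI1)
  next
    assume vp: "reach (E - {{u,v}}) v p"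
    have eq: "{{v,u}} = {{u,v}}" using ab_comm[of u v] by simp
    have "y \<in> side V E L v u" if "y \<in> Yf a b" for y
    proof -
      have "reach (E - {{u,v}}) v (L y)" using reach_trans[OF vp in_uv[OF that]] .
      then show ?thesis unfolding side_def eq using yV[OF that] by simp
    qed
    then have "Yf a b \<subseteq> side V E L v u" by (rule subsetI)
    then show ?thesis unfolding T_compl[OF uvE] by (rule disjI2)
  qed
qed

lemma type1_side:
  assumes ab: "{a,b} \<in> E" "{a,b} \<noteq> {u,v}" and i: "i \<in> {1,2,3}"
  shows "side V E0 lab (Cp i a) (Cp i b) = Ci i \<inter> Yf a b
      \<or> side V E0 lab (Cp i a) (Cp i b) = V - (Ci i \<inter> Yf a b)"
    and "\<not> reach (E0 - {{Cp i a, Cp i b}}) (Cp i a) (Cp i b)"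
proof -
  have "(side V E0 lab (Cp i a) (Cp i b) = Ci i \<inter> Yf a b
      \<or> side V E0 lab (Cp i a) (Cp i b) = V - (Ci i \<inter> Yf a b))
    \<and> \<not> reach (E0 - {{Cp i a, Cp i b}}) (Cp i a) (Cp i b)"
  proof (cases "reach (E - {{a,b}}) a u")
    case False
    then show ?thesis using side1[OF ab i False] unfolding Yf_def by simp
  next
    case True
    have nb: "\<not> reach (E - {{b,a}}) b u" using other_side[OF ab(1) True] .
    have "{b,a} = {a,b}" by (rule ab_comm)
    then have ba: "{b,a} \<in> E" "{b,a} \<noteq> {u,v}" using ab by simp_all
    note s = side1[OF ba i nb]
    have eq: "{{Cp i b, Cp i a}} = {{Cp i a, Cp i b}}" using ab_comm[of "Cp i a" "Cp i b"] by simp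
    have e0: "{Cp i b, Cp i a} \<in> E0" using E0_type1[OF ba i] .
    have "side V E0 lab (Cp i a) (Cp i b) = V - side V E0 lab (Cp i b) (Cp i a)"
      by (rule side_compl[OF s(2)]) (use conn_all[OF e0] in auto)
    moreover have "\<not> reach (E0 - {{Cp i a, Cp i b}}) (Cp i a) (Cp i b)"
      using s(2) reach_sym eq by metis
    ultimately show ?thesis using s(1) True unfolding Yf_def by simp
  qed
  then show "side V E0 lab (Cp i a) (Cp i b) = Ci i \<inter> Yf a b
      \<or> side V E0 lab (Cp i a) (Cp i b) = V - (Ci i \<inter> Yf a b)"
    and "\<not> reach (E0 - {{Cp i a, Cp i b}}) (Cp i a) (Cp i b)" by auto
qed

end

context rs begin

lemma flip:
  assumes "{c,d} \<in> E0" "\<not> reach (E0 - {{c,d}}) c d"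
  shows "\<not> reach (E0 - {{d,c}}) d c \<and> side V E0 lab d c = V - side V E0 lab c d"
proof
  have eq: "{{d,c}} = {{c,d}}" using ab_comm[of c d] by simp
  show "\<not> reach (E0 - {{d,c}}) d c" unfolding eq using assms(2) reach_sym by metis
  show "side V E0 lab d c = V - side V E0 lab c d"
    by (rule side_compl[OF assms(2)]) (use conn_all[OF assms(1)] in auto)
qed

definition fam :: "nat \<Rightarrow> 'v set set" where
  "fam i = {Ci i \<inter> side V E L u v, Ci i \<inter> side V E L v u, Ci i}"

definition goodside :: "'n rnode \<Rightarrow> 'n rnode \<Rightarrow> bool" where
  "goodside c d \<longleftrightarrow>
    (\<exists>i a b. i \<in> {1,2,3} \<and> {a,b} \<in> E \<and> {a,b} \<noteq> {u,v} \<and> {c,d} = {Cp i a, Cp i b}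
       \<and> (side V E0 lab c d = Ci i \<inter> Yf a b \<or> side V E0 lab c d = V - (Ci i \<inter> Yf a b)))
    \<or> (\<exists>i\<in>{1,2,3}. \<exists>X\<in>fam i. side V E0 lab c d = X \<or> side V E0 lab c d = V - X)"

lemma info_type1:
  assumes ab: "{a,b} \<in> E" "{a,b} \<noteq> {u,v}" and i: "i \<in> {1,2,3}"
  shows "\<not> reach (E0 - {{Cp i a, Cp i b}}) (Cp i a) (Cp i b) \<and> goodside (Cp i a) (Cp i b)"
proof
  show "\<not> reach (E0 - {{Cp i a, Cp i b}}) (Cp i a) (Cp i b)" using type1_side(2)[OF ab i] .
  show "goodside (Cp i a) (Cp i b)" unfolding goodside_def
    apply (rule disjI1)
    apply (rule exI[of _ i], rule exI[of _ a], rule exI[of _ b])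
    using type1_side(1)[OF ab i] ab i by simp
qed

lemma info_sub:
  assumes pq: "(p = u \<and> q = v) \<or> (p = v \<and> q = u)" and i: "i \<in> {1,2,3}"
  shows "\<not> reach (E0 - {{Cp i p, Sub i}}) (Cp i p) (Sub i) \<and> goodside (Cp i p) (Sub i)"
    and "\<not> reach (E0 - {{Sub i, Cp i p}}) (Sub i) (Cp i p) \<and> goodside (Sub i) (Cp i p)"
proof -
  note s = side2[OF pq i]
  have X: "Ci i \<inter> side V E L p q \<in> fam i" using pq unfolding fam_def by auto
  have "{Sub i, Cp i v} = {Cp i v, Sub i}" by (rule ab_comm)
  then have e: "{Cp i p, Sub i} \<in> E0" using E0_type2[OF i] pq by auto
  have g1: "goodside (Cp i p) (Sub i)" unfolding goodside_def
    apply (rule disjI2) apply (rule bexI[OF _ i]) apply (rule bexI[OF _ X]) using s(1) by simp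
  show "\<not> reach (E0 - {{Cp i p, Sub i}}) (Cp i p) (Sub i) \<and> goodside (Cp i p) (Sub i)"
    using s(2) g1 by simp
  note fl = flip[OF e s(2)]
  have g2: "goodside (Sub i) (Cp i p)" unfolding goodside_def
    apply (rule disjI2) apply (rule bexI[OF _ i]) apply (rule bexI[OF _ X]) using fl s(1) by simp
  show "\<not> reach (E0 - {{Sub i, Cp i p}}) (Sub i) (Cp i p) \<and> goodside (Sub i) (Cp i p)"
    using fl g2 by simp
qed

lemma info_ctr:
  assumes i: "i \<in> {1,2,3}"
  shows "\<not> reach (E0 - {{Sub i, Ctr}}) (Sub i) Ctr \<and> goodside (Sub i) Ctr"
    and "\<not> reach (E0 - {{Ctr, Sub i}}) Ctr (Sub i) \<and> goodside Ctr (Sub i)"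
proof -
  note s = side4[OF i]
  have X: "Ci i \<in> fam i" unfolding fam_def by auto
  have e: "{Sub i, Ctr} \<in> E0" using E0_type2[OF i] by auto
  have g1: "goodside (Sub i) Ctr" unfolding goodside_def
    apply (rule disjI2) apply (rule bexI[OF _ i]) apply (rule bexI[OF _ X]) using s(1) by simp
  show "\<not> reach (E0 - {{Sub i, Ctr}}) (Sub i) Ctr \<and> goodside (Sub i) Ctr"
    using s(2) g1 by simp
  note fl = flip[OF e s(2)]
  have g2: "goodside Ctr (Sub i)" unfolding goodside_def
    apply (rule disjI2) apply (rule bexI[OF _ i]) apply (rule bexI[OF _ X]) using fl s(1) by simp
  show "\<not> reach (E0 - {{Ctr, Sub i}}) Ctr (Sub i) \<and> goodside Ctr (Sub i)"
    using fl g2 by simp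
qed

lemma E0_info:
  assumes "{c,d} \<in> E0"
  shows "\<not> reach (E0 - {{c,d}}) c d \<and> goodside c d"
  using E0_cases[OF assms]
proof (elim disjE exE conjE bexE)
  fix i a b assume h: "i \<in> {1,2,3}" "{a,b} \<in> E" "{a,b} \<noteq> {u,v}" "{c,d} = {Cp i a, Cp i b}"
  then have "(c = Cp i a \<and> d = Cp i b) \<or> (c = Cp i b \<and> d = Cp i a)" by (simp add: doubleton_eq_iff)
  then show ?thesis
  proof
    assume "c = Cp i a \<and> d = Cp i b" then show ?thesis using info_type1[OF h(2,3,1)] by simp
  next
    assume cd: "c = Cp i b \<and> d = Cp i a"
    have "{b,a} = {a,b}" by (rule ab_comm)
    then have "{b,a} \<in> E" "{b,a} \<noteq> {u,v}" using h by simp_all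
    then show ?thesis using info_type1[of b a i] h(1) cd by simp
  qed
next
  fix i assume i: "i \<in> {1,2,3}" and h: "{c,d} = {Cp i u, Sub i}"
  then have "(c = Cp i u \<and> d = Sub i) \<or> (c = Sub i \<and> d = Cp i u)" by (simp add: doubleton_eq_iff)
  then show ?thesis using info_sub[of u v i] i by auto
next
  fix i assume i: "i \<in> {1,2,3}" and h: "{c,d} = {Sub i, Cp i v}"
  then have "(c = Cp i v \<and> d = Sub i) \<or> (c = Sub i \<and> d = Cp i v)" by (auto simp add: doubleton_eq_iff)
  then show ?thesis using info_sub[of v u i] i by auto
next
  fix i assume i: "i \<in> {1,2,3}" and h: "{c,d} = {Sub i, Ctr}"
  then have "(c = Sub i \<and> d = Ctr) \<or> (c = Ctr \<and> d = Sub i)" by (simp add: doubleton_eq_iff)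
  then show ?thesis using info_ctr[of i] i by auto
qed

end

context rs begin

lemma E0_fin: "finite E0"
proof -
  have "E0 \<subseteq> (\<lambda>(i,a,b). {Cp i a, Cp i b}) ` ({1,2,3} \<times> N \<times> N)
      \<union> (\<Union>i\<in>{1,2,3::nat}. {{Cp i u, Sub i}, {Sub i, Cp i v}, {Sub i, Ctr}})"
  proof
    fix e assume "e \<in> E0"
    from E0_cases[OF this] show "e \<in> (\<lambda>(i,a,b). {Cp i a, Cp i b}) ` ({1,2,3} \<times> N \<times> N)
      \<union> (\<Union>i\<in>{1,2,3::nat}. {{Cp i u, Sub i}, {Sub i, Cp i v}, {Sub i, Ctr}})"
    proof (elim disjE exE conjE bexE)
      fix i a b assume h: "i \<in> {1,2,3}" "{a,b} \<in> E" "{a,b} \<noteq> {u,v}" "e = {Cp i a, Cp i b}"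
      then have "(i,a,b) \<in> {1,2,3} \<times> N \<times> N" using T_edgeN[OF h(2)] by simp
      moreover have "e = (\<lambda>(i,a,b). {Cp i a, Cp i b}) (i,a,b)" using h(4) by simp
      ultimately show ?thesis by (intro UnI1) (rule image_eqI)
    next
      fix i assume "i \<in> {1,2,3}" "e = {Cp i u, Sub i}"
      then show ?thesis by (intro UnI2 UN_I[of i]) auto
    next
      fix i assume "i \<in> {1,2,3}" "e = {Sub i, Cp i v}"
      then show ?thesis by (intro UnI2 UN_I[of i]) auto
    next
      fix i assume "i \<in> {1,2,3}" "e = {Sub i, Ctr}"
      then show ?thesis by (intro UnI2 UN_I[of i]) auto
    qed
  qed
  moreover have "finite ((\<lambda>(i,a,b). {Cp i a, Cp i b}) ` ({1,2,3::nat} \<times> N \<times> N)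
      \<union> (\<Union>i\<in>{1,2,3::nat}. {{Cp i u, Sub i}, {Sub i, Cp i v}, {Sub i, Ctr}}))"
    using T_graph(1) by simp
  ultimately show ?thesis using finite_subset by blast
qed

lemma E0_I1: "\<forall>e\<in>E0. \<exists>c d. c \<noteq> d \<and> e = {c,d}"
proof
  fix e assume "e \<in> E0"
  from E0_cases[OF this] show "\<exists>c d. c \<noteq> d \<and> e = {c,d}"
  proof (elim disjE exE conjE bexE)
    fix i a b assume h: "i \<in> {1,2,3}" "{a,b} \<in> E" "{a,b} \<noteq> {u,v}" "e = {Cp i a, Cp i b}"
    then show ?thesis using T_ne[OF h(2)] by (intro exI[of _ "Cp i a"] exI[of _ "Cp i b"]) simp
  next
    fix i assume "i \<in> {1,2,3}" "e = {Cp i u, Sub i}"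
    then show ?thesis by (intro exI[of _ "Cp i u"] exI[of _ "Sub i"]) simp
  next
    fix i assume "i \<in> {1,2,3}" "e = {Sub i, Cp i v}"
    then show ?thesis by (intro exI[of _ "Sub i"] exI[of _ "Cp i v"]) simp
  next
    fix i assume "i \<in> {1,2,3}" "e = {Sub i, Ctr}"
    then show ?thesis by (intro exI[of _ "Sub i"] exI[of _ "Ctr"]) simp
  qed
qed

lemma lab_unique:
  assumes y: "y \<in> V" and e: "e1 \<in> E0" "e2 \<in> E0" "lab y \<in> e1" "lab y \<in> e2"
  shows "e1 = e2"
proof -
  obtain i where i: "i \<in> {1,2,3}" "lab y = Cp i (L y)" using lab_cases[OF y] by blast
  define l where "l = L y"
  have "card {e\<in>E. l \<in> e} = Suc 0" using L_deg[OF y] unfolding l_def deg_def by simp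
  then obtain el where el: "{e\<in>E. l \<in> e} = {el}" by (auto simp: card_1_singleton_iff)
  then have elE: "el \<in> E" "l \<in> el" by auto
  obtain c d where cd: "c \<noteq> d" "el = {c,d}" using T_edge[OF elE(1)] by blast
  obtain m where m: "el = {l,m}" using cd elE(2) by auto
  have uniq: "e = el" if "e \<in> E" "l \<in> e" for e using el that by auto
  define g where "g = (if l = u then {Cp i u, Sub i} else if l = v then {Sub i, Cp i v} else {Cp i l, Cp i m})"
  have key: "e = g" if "e \<in> E0" "Cp i l \<in> e" for e
    using E0_cases[OF that(1)]
  proof (elim disjE exE conjE bexE)
    fix j a b assume h: "j \<in> {1,2,3}" "{a,b} \<in> E" "{a,b} \<noteq> {u,v}" "e = {Cp j a, Cp j b}"
    then have ji: "j = i" and la: "l = a \<or> l = b" using that(2) by auto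
    then have abel: "{a,b} = {l,m}" using uniq[OF h(2)] m by auto
    have lu: "l \<noteq> u" "l \<noteq> v"
    proof -
      show "l \<noteq> u"
      proof
        assume "l = u" then have "{u,v} = el" using uniq[OF uvE] by simp
        then show False using abel m h(3) by simp
      qed
      show "l \<noteq> v"
      proof
        assume "l = v" then have "{u,v} = el" using uniq[OF uvE] by simp
        then show False using abel m h(3) by simp
      qed
    qed
    have "e = {Cp i l, Cp i m}" using h(4) ji abel by (auto simp: doubleton_eq_iff)
    then show "e = g" unfolding g_def using lu by simp
  next
    fix j assume "j \<in> {1,2,3}" "e = {Cp j u, Sub j}"
    then have "j = i" "l = u" "e = {Cp i u, Sub i}" using that(2) by auto
    then show "e = g" unfolding g_def by simp
  next
    fix j assume "j \<in> {1,2,3}" "e = {Sub j, Cp j v}"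
    then have "j = i" "l = v" "e = {Sub i, Cp i v}" using that(2) by auto
    then show "e = g" unfolding g_def using uv_ne by simp
  next
    fix j assume "j \<in> {1,2,3}" "e = {Sub j, Ctr}"
    then show "e = g" using that(2) by auto
  qed
  have "Cp i l \<in> e1" "Cp i l \<in> e2" using e i unfolding l_def by auto
  then show ?thesis using key e(1,2) by metis
qed

lemma lab_inj: "y1 \<in> V \<Longrightarrow> y2 \<in> V \<Longrightarrow> lab y1 = lab y2 \<Longrightarrow> y1 = y2"
  using lab_cases L_inj by (metis inj_on_def rnode.inject(1))

lemma E0_inv:
  assumes "y1 \<in> V" "y2 \<in> V"
  shows "inv_g (lab ` V) (lab y1) (lab y2) E0"
  unfolding inv_g_def
proof (intro conjI)
  show "finite E0" by (rule E0_fin)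
  show "\<forall>e\<in>E0. \<exists>c d. c \<noteq> d \<and> e = {c,d}" by (rule E0_I1)
  show "\<forall>c d. {c, d} \<in> E0 \<longrightarrow> \<not> reach (E0 - {{c, d}}) c d"
  proof (intro allI impI)
    fix c d assume "{c, d} \<in> E0" then show "\<not> reach (E0 - {{c, d}}) c d" using E0_info by simp
  qed
  show "\<forall>z\<in>lab ` V. \<forall>e1\<in>E0. \<forall>e2\<in>E0. z \<in> e1 \<longrightarrow> z \<in> e2 \<longrightarrow> e1 = e2"
  proof (intro ballI impI)
    fix z e1 e2 assume z: "z \<in> lab ` V" and e: "e1 \<in> E0" "e2 \<in> E0" "z \<in> e1" "z \<in> e2"
    from z obtain y where y: "y \<in> V" "z = lab y" by (rule imageE) simp
    show "e1 = e2" using lab_unique[OF y(1) e(1,2)] e(3,4) y(2) by simp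
  qed
  show "reach E0 (lab y1) (lab y2)"
    using reach_trans[OF reach_sym[OF conn_lab[OF assms(1)]] conn_lab[OF assms(2)]] .
  show "lab y1 \<in> lab ` V" "lab y2 \<in> lab ` V" using assms by auto
qed

end

locale rsf = rs +
  fixes f :: "'a set \<Rightarrow> nat" and k :: nat
  assumes cf: "connectivity_function V f"
    and imp: "improvement V f (side V E L u v) C1 C2 C3"
    and min: "\<And>D1 D2 D3. improvement V f (side V E L u v) D1 D2 D3 \<Longrightarrow> f C1 + f C2 + f C3 \<le> f D1 + f D2 + f D3"
    and dw: "dwidth V f E L = k" and fk: "f (side V E L u v) = k"
begin

abbreviation "W \<equiv> side V E L u v"

lemma W_sub: "W \<subseteq> V" by (rule side_sub)

lemma Ci_imp: "i \<in> {1,2,3} \<Longrightarrow> 2 * f (Ci i) < k \<and> f (Ci i \<inter> W) < k \<and> f (Ci i \<inter> (V - W)) < k"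
  using improvement_parts[OF cf imp] fk unfolding CC_def by auto

lemma Ci_disj: "i \<in> {1,2,3} \<Longrightarrow> j \<in> {1,2,3} \<Longrightarrow> i \<noteq> j \<Longrightarrow> Ci i \<inter> Ci j = {}"
  using part unfolding CC_def by auto

lemma T_width: assumes "{a,b} \<in> E" shows "f (side V E L a b) \<le> k"
proof -
  have "edge_widths V f E L \<subseteq> (\<lambda>(a,b). f (side V E L a b)) ` (N \<times> N)"
    unfolding edge_widths_def using T_edgeN by fastforce
  then have fin: "finite (edge_widths V f E L)" using T_graph(1) finite_subset by blast
  have "f (side V E L a b) \<in> edge_widths V f E L" unfolding edge_widths_def using assms by blast
  then show ?thesis using Max_ge[OF fin] dw unfolding dwidth_def by simp
qed

lemma Yf_f: assumes "{a,b} \<in> E" shows "f (Yf a b) = f (side V E L a b)"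
proof (cases "reach (E - {{a,b}}) a u")
  case True
  then have "Yf a b = V - side V E L a b" unfolding Yf_def using T_compl[OF assms] by simp
  then show ?thesis using cf_sym[OF cf side_sub] by simp
next
  case False then show ?thesis unfolding Yf_def by simp
qed

lemma Yf_le:
  assumes ab: "{a,b} \<in> E" "{a,b} \<noteq> {u,v}" and i: "i \<in> {1,2,3}"
  shows "f (Ci i \<inter> Yf a b) \<le> f (Yf a b)"
proof -
  note g = min_improvement_good[OF cf W_sub imp min Yf_WW[OF ab]]
  have "Ci i \<inter> Yf a b = Yf a b \<inter> Ci i" by blast
  then show ?thesis using g i unfolding CC_def by auto
qed

lemma E0_width:
  assumes "{c,d} \<in> E0"
  shows "f (side V E0 lab c d) \<le> k \<and> (f (side V E0 lab c d) = k \<longrightarrow>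
     (\<exists>i a b. i \<in> {1,2,3} \<and> {a,b} \<in> E \<and> {a,b} \<noteq> {u,v} \<and> {c,d} = {Cp i a, Cp i b}
        \<and> f (Ci i \<inter> Yf a b) = k))"
proof -
  have g: "goodside c d" using E0_info[OF assms] by simp
  have fc: "f (V - X) = f X" if "X \<subseteq> V" for X using cf_sym[OF cf that] .
  have feq: "f S = f X" if "S = X \<or> S = V - X" "X \<subseteq> V" for S X
    using that(1)
  proof
    assume "S = V - X" then show ?thesis using fc[OF that(2)] by simp
  qed simp
  show ?thesis using g unfolding goodside_def
  proof
    assume "\<exists>i a b. i \<in> {1,2,3} \<and> {a,b} \<in> E \<and> {a,b} \<noteq> {u,v} \<and> {c,d} = {Cp i a, Cp i b}
       \<and> (side V E0 lab c d = Ci i \<inter> Yf a b \<or> side V E0 lab c d = V - (Ci i \<inter> Yf a b))"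
    then obtain i a b where h: "i \<in> {1,2,3}" "{a,b} \<in> E" "{a,b} \<noteq> {u,v}" "{c,d} = {Cp i a, Cp i b}"
      and s: "side V E0 lab c d = Ci i \<inter> Yf a b \<or> side V E0 lab c d = V - (Ci i \<inter> Yf a b)"
      by metis
    have "Ci i \<inter> Yf a b \<subseteq> V" using Yf_sub by blast
    then have eq: "f (side V E0 lab c d) = f (Ci i \<inter> Yf a b)" using feq[OF s] by simp
    have le: "f (Ci i \<inter> Yf a b) \<le> k" using Yf_le[OF h(2,3,1)] Yf_f[OF h(2)] T_width[OF h(2)] by simp
    have ex: "f (side V E0 lab c d) = k \<longrightarrow>
     (\<exists>i a b. i \<in> {1,2,3} \<and> {a,b} \<in> E \<and> {a,b} \<noteq> {u,v} \<and> {c,d} = {Cp i a, Cp i b}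
        \<and> f (Ci i \<inter> Yf a b) = k)"
    proof (rule impI)
      assume "f (side V E0 lab c d) = k"
      then have "f (Ci i \<inter> Yf a b) = k" using eq by simp
      then have "i \<in> {1,2,3} \<and> {a,b} \<in> E \<and> {a,b} \<noteq> {u,v} \<and> {c,d} = {Cp i a, Cp i b}
        \<and> f (Ci i \<inter> Yf a b) = k" using h(1) h(2) h(3) h(4) by (intro conjI)
      then show "\<exists>i a b. i \<in> {1,2,3} \<and> {a,b} \<in> E \<and> {a,b} \<noteq> {u,v} \<and> {c,d} = {Cp i a, Cp i b}
        \<and> f (Ci i \<inter> Yf a b) = k" by (intro exI)
    qed
    show ?thesis using ex eq le by simp
  next
    assume "\<exists>i\<in>{1,2,3}. \<exists>X\<in>fam i. side V E0 lab c d = X \<or> side V E0 lab c d = V - X"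
    then obtain i X where i: "i \<in> {1,2,3}" and X: "X \<in> fam i"
      and s: "side V E0 lab c d = X \<or> side V E0 lab c d = V - X" by metis
    have XV: "X \<subseteq> V" using X CC_sub unfolding fam_def by auto
    then have eq: "f (side V E0 lab c d) = f X" using feq[OF s] by simp
    have vu: "side V E L v u = V - W" using T_compl[OF uvE] .
    have "X = Ci i \<inter> W \<or> X = Ci i \<inter> side V E L v u \<or> X = Ci i" using X unfolding fam_def by simp
    then have "f X < k" using Ci_imp[OF i] vu by auto
    then show ?thesis using eq by simp
  qed
qed

lemma E0_widths: "edge_widths V f E0 lab \<subseteq> {..k}"
  unfolding edge_widths_def using E0_width by fastforce

definition phi :: "'b rnode set \<Rightarrow> 'b set" where "phi e = {z. \<exists>i. Cp i z \<in> e}"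

lemma phi_t1: "phi {Cp i a, Cp i b} = {a,b}" unfolding phi_def by auto

lemma count: "n_width_edges V f E0 lab k < n_width_edges V f E L k"
proof -
  define S0 where "S0 = {e \<in> E0. \<exists>c d. e = {c, d} \<and> f (side V E0 lab c d) = k}"
  define ST where "ST = {e \<in> E. \<exists>c d. e = {c, d} \<and> f (side V E L c d) = k}"
  have S0D: "\<exists>i a b. i \<in> {1,2,3} \<and> {a,b} \<in> E \<and> {a,b} \<noteq> {u,v} \<and> e = {Cp i a, Cp i b}
        \<and> f (Ci i \<inter> Yf a b) = k" if eS: "e \<in> S0" for e
  proof -
    obtain c d where cd: "e \<in> E0" "e = {c,d}" "f (side V E0 lab c d) = k" using eS unfolding S0_def by blast
    show ?thesis using E0_width[of c d] cd by auto
  qed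
  have finT: "finite ST" unfolding ST_def using T_finE by simp
  have uvST: "{u,v} \<in> ST" unfolding ST_def using uvE fk by blast
  have img: "phi ` S0 \<subseteq> ST - {{u,v}}"
  proof
    fix x assume "x \<in> phi ` S0"
    then obtain e where e: "e \<in> S0" "x = phi e" by blast
    obtain i a b where h: "i \<in> {1,2,3}" "{a,b} \<in> E" "{a,b} \<noteq> {u,v}" "e = {Cp i a, Cp i b}"
        "f (Ci i \<inter> Yf a b) = k" using S0D[OF e(1)] by blast
    have "f (side V E L a b) = k"
      using Yf_le[OF h(2,3,1)] Yf_f[OF h(2)] T_width[OF h(2)] h(5) by simp
    then have "{a,b} \<in> ST" unfolding ST_def using h(2) by blast
    then show "x \<in> ST - {{u,v}}" using e(2) h(3,4) phi_t1 by simp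
  qed
  have inj: "inj_on phi S0"
  proof (rule inj_onI)
    fix e1 e2 assume e1: "e1 \<in> S0" and e2: "e2 \<in> S0" and p: "phi e1 = phi e2"
    obtain i a b where h: "i \<in> {1,2,3}" "{a,b} \<in> E" "{a,b} \<noteq> {u,v}" "e1 = {Cp i a, Cp i b}"
        "f (Ci i \<inter> Yf a b) = k" using S0D[OF e1] by blast
    obtain j c d where h2: "j \<in> {1,2,3}" "{c,d} \<in> E" "{c,d} \<noteq> {u,v}" "e2 = {Cp j c, Cp j d}"
        "f (Ci j \<inter> Yf c d) = k" using S0D[OF e2] by blast
    have abcd: "{a,b} = {c,d}" using p h(4) h2(4) phi_t1 by simp
    then have Y: "Yf c d = Yf a b"
      using Yf_sym[OF h(2)] by (auto simp: doubleton_eq_iff)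
    show "e1 = e2"
    proof (cases "i = j")
      case True
      then show ?thesis using h(4) h2(4) abcd by (auto simp: doubleton_eq_iff)
    next
      case False
      let ?X = "Yf a b"
      have fX: "f ?X = k"
        using Yf_le[OF h(2,3,1)] Yf_f[OF h(2)] T_width[OF h(2)] h(5) by simp
      have "f ?X < k"
      proof (rule two_parts_bound[OF cf Yf_sub CC_sub CC_sub Ci_disj[OF h(1) h2(1) False]])
        show "2 * f (Ci i) < k" "2 * f (Ci j) < k" using Ci_imp h(1) h2(1) by auto
        have "?X \<inter> Ci i = Ci i \<inter> ?X" "?X \<inter> Ci j = Ci j \<inter> ?X" by blast+
        then show "f ?X \<le> f (?X \<inter> Ci i)" "f ?X \<le> f (?X \<inter> Ci j)" using fX h(5) h2(5) Y by simp_all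
      qed
      then show ?thesis using fX by simp
    qed
  qed
  have "card S0 = card (phi ` S0)" using card_image[OF inj] by simp
  also have "\<dots> \<le> card (ST - {{u,v}})" using card_mono[OF _ img] finT by simp
  also have "\<dots> < card ST" by (rule card_Diff1_less[OF finT uvST])
  finally show ?thesis unfolding n_width_edges_def S0_def ST_def .
qed

end

theorem theorem4:
  fixes V :: "'v set" and f :: "'v set \<Rightarrow> nat"
    and N :: "'n set" and E :: "'n set set" and L :: "'v \<Rightarrow> 'n"
    and k h :: nat and u v :: 'n and W :: "'v set"
  assumes "connectivity_function V f"
    and "branch_decomposition V N E L"
    and "dwidth V f E L = k"
    and "n_width_edges V f E L k = h" and "h \<ge> 1"
    and "{u, v} \<in> E" and "f (side V E L u v) = k"
    and "W = side V E L u v"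
    and "\<exists>C1 C2 C3. improvement V f W C1 C2 C3"
  shows "\<exists>C1 C2 C3. improvement V f W C1 C2 C3 \<and>
           (\<forall>N' E'. is_refinement V N E L u v C1 C2 C3 N' E' \<longrightarrow>
              dwidth V f E' (ref_label L C1 C2) \<le> k
              \<and> n_width_edges V f E' (ref_label L C1 C2) k < h)"
proof -
  note cf = assms(1) and bd = assms(2) and dw = assms(3) and hdef = assms(4)
    and uvE = assms(6) and fk = assms(7) and Wdef = assms(8)
  obtain D1 D2 D3 where D: "improvement V f W D1 D2 D3" using assms(9) by blast
  let ?P = "\<lambda>t. improvement V f W (fst t) (fst (snd t)) (snd (snd t))"
  let ?m = "\<lambda>t. f (fst t) + f (fst (snd t)) + f (snd (snd t))"
  have "?P (D1, D2, D3)" using D by simp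
  from ex_has_least_nat[of ?P "(D1,D2,D3)" ?m, OF this]
  obtain t where t: "?P t" "\<forall>y. ?P y \<longrightarrow> ?m t \<le> ?m y" by (elim exE conjE)
  obtain C1 C2 C3 where tC: "t = (C1, C2, C3)" by (cases t) auto
  have imp: "improvement V f W C1 C2 C3" using t(1) tC by simp
  have min: "f C1 + f C2 + f C3 \<le> f D1 + f D2 + f D3" if "improvement V f W D1 D2 D3" for D1 D2 D3
    using t(2) that tC by (metis fst_conv snd_conv)
  note pt = improvement_parts[OF cf imp]
  interpret r: rsf V N E L u v C1 C2 C3 f k
  proof
    show "branch_decomposition V N E L" by (rule bd)
    show "{u,v} \<in> E" by (rule uvE)
    show "C1 \<inter> C2 = {}" "C1 \<inter> C3 = {}" "C2 \<inter> C3 = {}" "C1 \<union> C2 \<union> C3 = V" using pt by auto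
    show "connectivity_function V f" by (rule cf)
    show "improvement V f (side V E L u v) C1 C2 C3" using imp Wdef by simp
    show "\<And>D1 D2 D3. improvement V f (side V E L u v) D1 D2 D3 \<Longrightarrow> f C1 + f C2 + f C3 \<le> f D1 + f D2 + f D3"
      using min Wdef by simp
    show "dwidth V f E L = k" by (rule dw)
    show "f (side V E L u v) = k" by (rule fk)
  qed
  have kpos: "0 < f W" using pt(8) by simp
  have WV: "W \<subseteq> V" using Wdef r.side_sub by metis
  have "W \<noteq> {}" using kpos cf_empty[OF cf] by auto
  then obtain y1 where y1: "y1 \<in> W" by blast
  have "f (V - W) = f W" using cf_sym[OF cf WV] .
  then have "V - W \<noteq> {}" using kpos cf_empty[OF cf] by (metis less_irrefl)
  then obtain y2 where y2: "y2 \<in> V - W" by blast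
  have y1V: "y1 \<in> V" using y1 WV by blast
  have y2V: "y2 \<in> V" using y2 by blast
  have ne: "ref_label L C1 C2 y1 \<noteq> ref_label L C1 C2 y2"
    using r.lab_inj[OF y1V y2V] y1 y2 by blast
  have inv0: "inv_g (ref_label L C1 C2 ` V) (ref_label L C1 C2 y1) (ref_label L C1 C2 y2) (ref_edges E u v)"
    using r.E0_inv[OF y1V y2V] .
  have cnt: "n_width_edges V f (ref_edges E u v) (ref_label L C1 C2) k < h"
    using r.count hdef by simp
  have "\<forall>N' E'. is_refinement V N E L u v C1 C2 C3 N' E' \<longrightarrow>
              dwidth V f E' (ref_label L C1 C2) \<le> k
              \<and> n_width_edges V f E' (ref_label L C1 C2) k < h"
  proof (intro allI impI)
    fix N' E' assume "is_refinement V N E L u v C1 C2 C3 N' E'"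
    then have st: "(cleanup_step (ref_label L C1 C2 ` V))\<^sup>*\<^sup>* (ref_nodes N, ref_edges E u v) (N', E')"
      unfolding is_refinement_def Let_def by blast
    from refinement_props[OF st inv0 ne r.E0_widths]
    show "dwidth V f E' (ref_label L C1 C2) \<le> k \<and> n_width_edges V f E' (ref_label L C1 C2) k < h"
      using cnt by simp
  qed
  then show ?thesis using imp by blast
qed

end
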